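(* Let $\Omega\subset\mathbb{R}^N$ be a domain, $a\in C(\bar\Omega)\cap L^\infty(\Omega)$, and $K:\Omega\times\Omega\to[0,\infty)$ such that for every $x\in\Omega$ the map $K(x,\cdot)$ is measurable, for almost every $y\in\Omega$ the map $K(\cdot,y)$ is uniformly continuous, and there exist $r_0\ge r_1>0$, $C_0\ge c_0>0$ with $C_0\,\mathbb{1}_{\Omega\cap B_{r_0}(x)}(y)\ge K(x,y)\ge c_0\,\mathbb{1}_{\Omega\cap B_{r_1}(x)}(y)$ for all $x,y\in\Omega$. Let $(\Omega_n)_{n\in\mathbb{N}}$ be subdomains of $\Omega$ with $\Omega_n\subset\Omega_{n+1}$ and $\lim_{n\to\infty}\Omega_n=\Omega$. Then $$\lim_{n\to\infty}\lambda_p(\mathcal{L}_{\Omega_n}+a)=\lambda_p(\mathcal{L}_\Omega+a).$$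
   Context: For a subdomain $D\subset\Omega$, $\mathcal{L}_D[\varphi](x):=\int_D K(x,y)\varphi(y)\,dy$ for $x\in D$, and $\lambda_p(\mathcal{L}_D+a):=\sup\{\lambda\in\mathbb{R}:\exists\varphi\in C(\bar D),\ \varphi>0,\ \mathcal{L}_D[\varphi]+a\varphi+\lambda\varphi\le0\text{ in }D\}$. *)

theory Defs
  imports "HOL-Analysis.Analysis"
begin

definition nonlocal_op ::
  "('a::euclidean_space) set \<Rightarrow> ('a \<Rightarrow> 'a \<Rightarrow> real) \<Rightarrow> ('a \<Rightarrow> real) \<Rightarrow> 'a \<Rightarrow> real" where
  "nonlocal_op D K \<phi> x = (LINT y:D|lebesgue. K x y * \<phi> y)"

definition lambda_p ::
  "('a::euclidean_space) set \<Rightarrow> ('a \<Rightarrow> 'a \<Rightarrow> real) \<Rightarrow> ('a \<Rightarrow> real) \<Rightarrow> real" where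
  "lambda_p D K a = Sup {l. \<exists>\<phi>. continuous_on (closure D) \<phi> \<and> (\<forall>x\<in>closure D. \<phi> x > 0) \<and>
      (\<forall>x\<in>D. nonlocal_op D K \<phi> x + a x * \<phi> x + l * \<phi> x \<le> 0)}"

definition is_domain :: "('a::topological_space) set \<Rightarrow> bool" where
  "is_domain D \<longleftrightarrow> open D \<and> connected D \<and> D \<noteq> {}"

end

theory Submission
  imports Defs
begin


locale kctx =
  fixes \<Omega> :: "'a::euclidean_space set"
    and a :: "'a \<Rightarrow> real"
    and K :: "'a \<Rightarrow> 'a \<Rightarrow> real"
    and r0 r1 C0 c0 :: real
  assumes dom: "is_domain \<Omega>"
    and a_cont: "continuous_on (closure \<Omega>) a"
    and a_bdd: "bounded (a ` \<Omega>)"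
    and K_nonneg: "\<And>x y. x \<in> \<Omega> \<Longrightarrow> y \<in> \<Omega> \<Longrightarrow> K x y \<ge> 0"
    and K_meas: "\<And>x. x \<in> \<Omega> \<Longrightarrow> set_borel_measurable lebesgue \<Omega> (K x)"
    and K_ucont: "AE y in lebesgue. y \<in> \<Omega> \<longrightarrow> uniformly_continuous_on \<Omega> (\<lambda>x. K x y)"
    and radii: "r0 \<ge> r1" "r1 > 0"
    and const_bds: "C0 \<ge> c0" "c0 > 0"
    and K_bounds: "\<And>x y. x \<in> \<Omega> \<Longrightarrow> y \<in> \<Omega> \<Longrightarrow>
        C0 * indicator (\<Omega> \<inter> ball x r0) y \<ge> K x y \<and> K x y \<ge> c0 * indicator (\<Omega> \<inter> ball x r1) y"
begin

definition lset :: "'a set \<Rightarrow> real set" where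
  "lset D = {l. \<exists>\<phi>. continuous_on (closure D) \<phi> \<and> (\<forall>x\<in>closure D. \<phi> x > 0) \<and>
      (\<forall>x\<in>D. nonlocal_op D K \<phi> x + a x * \<phi> x + l * \<phi> x \<le> 0)}"

lemma lambda_p_lset: "lambda_p D K a = Sup (lset D)"
  unfolding lambda_p_def lset_def by simp

lemma Om_open: "open \<Omega>" and Om_ne: "\<Omega> \<noteq> {}" and Om_conn: "connected \<Omega>"
  using dom by (auto simp: is_domain_def)

lemma C0_pos: "C0 > 0" using const_bds by linarith

lemma K_le: "x \<in> \<Omega> \<Longrightarrow> y \<in> \<Omega> \<Longrightarrow> K x y \<le> C0 * indicator (\<Omega> \<inter> ball x r0) y"
  using K_bounds by blast

lemma K_ge: "x \<in> \<Omega> \<Longrightarrow> y \<in> \<Omega> \<Longrightarrow> c0 * indicator (\<Omega> \<inter> ball x r1) y \<le> K x y"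
  using K_bounds by blast

lemma K_leC0: "x \<in> \<Omega> \<Longrightarrow> y \<in> \<Omega> \<Longrightarrow> K x y \<le> C0"
  using K_le[of x y] C0_pos by (cases "dist x y < r0") (auto simp: indicator_def)

lemma K_far: "x \<in> \<Omega> \<Longrightarrow> y \<in> \<Omega> \<Longrightarrow> r0 \<le> dist x y \<Longrightarrow> K x y = 0"
  using K_le[of x y] K_nonneg[of x y] by (auto simp: indicator_def)

lemma K_near: "x \<in> \<Omega> \<Longrightarrow> y \<in> \<Omega> \<Longrightarrow> dist x y < r1 \<Longrightarrow> c0 \<le> K x y"
  using K_ge[of x y] by (auto simp: indicator_def)

lemma meas_K: 
  assumes "x \<in> \<Omega>" "D \<subseteq> \<Omega>" "D \<in> sets lebesgue"
  shows "(\<lambda>y. indicator D y * K x y) \<in> borel_measurable lebesgue"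
proof -
  have m: "(\<lambda>y. indicator \<Omega> y *\<^sub>R K x y) \<in> borel_measurable lebesgue"
    using K_meas[OF assms(1)] by (simp add: set_borel_measurable_def)
  have "(\<lambda>y. indicator D y * (indicator \<Omega> y *\<^sub>R K x y)) \<in> borel_measurable lebesgue"
    using m assms(3) by measurable
  moreover have "(\<lambda>y. indicator D y * (indicator \<Omega> y *\<^sub>R K x y)) = (\<lambda>y. indicator D y * K x y)"
    using assms(2) by (auto simp: indicator_def fun_eq_iff)
  ultimately show ?thesis by simp
qed

lemma meas_cont:
  fixes f :: "'a \<Rightarrow> real"
  assumes "open D" "continuous_on (closure D) f"
  shows "(\<lambda>y. indicator D y * f y) \<in> borel_measurable lebesgue"
proof -
  have "continuous_on D f" using assms(2) closure_subset continuous_on_subset by blast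
  then have "(\<lambda>y. indicator D y *\<^sub>R f y) \<in> borel_measurable borel"
    using assms(1) by (intro borel_measurable_continuous_on_indicator) auto
  then have "(\<lambda>y. indicator D y *\<^sub>R f y) \<in> borel_measurable lebesgue"
    by (simp add: measurable_completion measurable_lborel1)
  then show ?thesis by simp
qed

lemma integrable_L:
  assumes x: "x \<in> \<Omega>" and D: "D \<subseteq> \<Omega>" "open D" and f: "continuous_on (closure D) f"
  shows "integrable lebesgue (\<lambda>y. indicator D y *\<^sub>R (K x y * f y))"
proof -
  have "compact (closure D \<inter> cball x r0)"
    by (simp add: closed_Int_compact)
  then have "compact (f ` (closure D \<inter> cball x r0))"
    using f by (meson compact_continuous_image continuous_on_subset inf_le1)
  then obtain Mf where Mf: "\<And>y. y \<in> closure D \<inter> cball x r0 \<Longrightarrow> norm (f y) \<le> Mf"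
    by (meson bounded_iff compact_imp_bounded imageI)
  define M where "M = max Mf 0"
  have M: "\<And>y. y \<in> closure D \<inter> cball x r0 \<Longrightarrow> \<bar>f y\<bar> \<le> M" "M \<ge> 0"
    using Mf by (auto simp: M_def le_max_iff_disj)
  have int: "integrable lebesgue (\<lambda>y. (C0 * M) * indicator (cball x r0) y)"
    by (intro integrable_mult_right integrable_real_indicator)
       (use emeasure_lborel_cball_finite[of x r0] in auto)
  have meas: "(\<lambda>y. indicator D y *\<^sub>R (K x y * f y)) \<in> borel_measurable lebesgue"
  proof -
    have Dm: "D \<in> sets lebesgue" using D(2) by simp
    have [measurable]: "(\<lambda>y. indicator D y * K x y) \<in> borel_measurable lebesgue"
      by (rule meas_K[OF x D(1) Dm])
    have [measurable]: "(\<lambda>y. indicator D y * f y) \<in> borel_measurable lebesgue"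
      by (rule meas_cont[OF D(2) f])
    have "(\<lambda>y. (indicator D y * K x y) * (indicator D y * f y)) \<in> borel_measurable lebesgue"
      by measurable
    moreover have "(\<lambda>y. (indicator D y * K x y) * (indicator D y * f y)) = (\<lambda>y. indicator D y *\<^sub>R (K x y * f y))"
      by (auto simp: fun_eq_iff indicator_def)
    ultimately show ?thesis by simp
  qed
  show ?thesis
  proof (rule Bochner_Integration.integrable_bound[OF int meas], rule AE_I2)
    fix y
    show "norm (indicator D y *\<^sub>R (K x y * f y)) \<le> norm ((C0 * M) * indicator (cball x r0) y)"
    proof (cases "y \<in> D")
      case True
      then have yO: "y \<in> \<Omega>" using D by auto
      show ?thesis
      proof (cases "dist x y < r0")
        case True
        have yc: "y \<in> closure D \<inter> cball x r0" using \<open>y \<in> D\<close> True closure_subset by auto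
        have "\<bar>K x y * f y\<bar> = K x y * \<bar>f y\<bar>" using K_nonneg[OF x yO] by (simp add: abs_mult)
        also have "\<dots> \<le> C0 * M"
          using K_leC0[OF x yO] M(1)[OF yc] K_nonneg[OF x yO] by (intro mult_mono) auto
        finally show ?thesis using \<open>y \<in> D\<close> yc M(2) C0_pos by (simp add: indicator_def)
      next
        case False
        then show ?thesis using K_far[OF x yO] M(2) C0_pos by (simp add: indicator_def)
      qed
    next
      case False
      then show ?thesis by simp
    qed
  qed
qed

lemma L_nonneg:
  assumes x: "x \<in> \<Omega>" and D: "D \<subseteq> \<Omega>" and f: "\<And>y. y \<in> D \<Longrightarrow> f y \<ge> 0"
  shows "nonlocal_op D K f x \<ge> 0"
  unfolding nonlocal_op_def set_lebesgue_integral_def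
  by (rule integral_nonneg_AE, rule AE_I2)
     (use D f K_nonneg[OF x] in \<open>auto simp: indicator_def\<close>)

lemma L_nn:
  assumes x: "x \<in> \<Omega>" and D: "D \<subseteq> \<Omega>" "open D" and f: "continuous_on (closure D) f"
    and fpos: "\<And>y. y \<in> D \<Longrightarrow> f y \<ge> 0"
  shows "ennreal (nonlocal_op D K f x) = (\<integral>\<^sup>+ y. ennreal (indicator D y * K x y * f y) \<partial>lebesgue)"
proof -
  have "(\<integral>\<^sup>+ y. ennreal (indicator D y *\<^sub>R (K x y * f y)) \<partial>lebesgue) =
      ennreal (integral\<^sup>L lebesgue (\<lambda>y. indicator D y *\<^sub>R (K x y * f y)))"
    by (rule nn_integral_eq_integral[OF integrable_L[OF x D f]], rule AE_I2)
       (use D fpos K_nonneg[OF x] in \<open>auto simp: indicator_def\<close>)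
  then show ?thesis
    by (simp add: nonlocal_op_def set_lebesgue_integral_def mult.assoc)
qed

lemma lset_le:
  assumes D: "D \<subseteq> \<Omega>" and x: "x \<in> D" and l: "l \<in> lset D"
  shows "l \<le> - a x"
proof -
  from l obtain \<phi> where p: "\<forall>x\<in>closure D. \<phi> x > 0"
    and ineq: "\<forall>x\<in>D. nonlocal_op D K \<phi> x + a x * \<phi> x + l * \<phi> x \<le> 0"
    unfolding lset_def by blast
  have px: "\<phi> x > 0" using p x closure_subset by blast
  have "nonlocal_op D K \<phi> x \<ge> 0"
    using L_nonneg[of x D \<phi>] D x p closure_subset by force
  moreover have "nonlocal_op D K \<phi> x + a x * \<phi> x + l * \<phi> x \<le> 0" using ineq x by blast
  ultimately have "(a x + l) * \<phi> x \<le> 0" unfolding distrib_right by linarith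
  then have "a x + l \<le> 0" using px by (simp add: mult_le_0_iff)
  thus ?thesis by simp
qed

lemma a_bound: obtains A where "\<And>x. x \<in> \<Omega> \<Longrightarrow> \<bar>a x\<bar> \<le> A"
  using a_bdd unfolding bounded_iff by auto

lemma lset_ne:
  assumes D: "D \<subseteq> \<Omega>" "open D"
  shows "lset D \<noteq> {}"
proof -
  obtain A where A: "\<And>x. x \<in> \<Omega> \<Longrightarrow> \<bar>a x\<bar> \<le> A" using a_bound by blast
  define V where "V = unit_ball_vol (DIM('a)) * r0 ^ DIM('a)"
  have mV: "measure lebesgue (ball x r0) = V" for x :: 'a
    using radii by (simp add: measure_def emeasure_ball V_def)
  have Lb: "nonlocal_op D K (\<lambda>_. 1) x \<le> C0 * V" if x: "x \<in> D" for x
  proof -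
    have xO: "x \<in> \<Omega>" using x D by auto
    have "nonlocal_op D K (\<lambda>_. 1) x = integral\<^sup>L lebesgue (\<lambda>y. indicator D y *\<^sub>R (K x y * 1))"
      by (simp add: nonlocal_op_def set_lebesgue_integral_def)
    also have "\<dots> \<le> integral\<^sup>L lebesgue (\<lambda>y. C0 * indicator (ball x r0) y)"
    proof (rule integral_mono)
      show "integrable lebesgue (\<lambda>y. indicator D y *\<^sub>R (K x y * 1))"
        by (rule integrable_L[OF xO D]) simp
      show "integrable lebesgue (\<lambda>y. C0 * indicator (ball x r0) y)"
        by (intro integrable_mult_right integrable_real_indicator)
           (use emeasure_lborel_ball_finite[of x r0] in auto)
      fix y
      show "indicator D y *\<^sub>R (K x y * 1) \<le> C0 * indicator (ball x r0) y"
      proof (cases "y \<in> D")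
        case True
        then have "y \<in> \<Omega>" using D by auto
        then show ?thesis using K_le[OF xO \<open>y \<in> \<Omega>\<close>] True by (auto simp: indicator_def)
      qed (use C0_pos in auto)
    qed
    also have "\<dots> = C0 * V" using mV[of x] by simp
    finally show ?thesis .
  qed
  have "- (C0 * V) - A \<in> lset D"
    unfolding lset_def
  proof (intro CollectI exI[of _ "\<lambda>_. 1"] conjI ballI)
    fix x assume x: "x \<in> D"
    then have "\<bar>a x\<bar> \<le> A" using A D by auto
    then have "a x \<le> A" by (rule abs_le_D1)
    then show "nonlocal_op D K (\<lambda>_. 1) x + a x * 1 + (- (C0 * V) - A) * 1 \<le> 0"
      using Lb[OF x] unfolding mult_1_right by linarith
  qed auto
  then show ?thesis by blast
qed

lemma lset_bdd: "D \<subseteq> \<Omega> \<Longrightarrow> x \<in> D \<Longrightarrow> bdd_above (lset D)"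
  using lset_le by (meson bdd_aboveI)

lemma lam_le: "D \<subseteq> \<Omega> \<Longrightarrow> open D \<Longrightarrow> x \<in> D \<Longrightarrow> lambda_p D K a \<le> - a x"
  unfolding lambda_p_lset using lset_le lset_ne by (meson cSup_least)

lemma lset_down: "l \<in> lset D \<Longrightarrow> l' \<le> l \<Longrightarrow> l' \<in> lset D"
  unfolding lset_def
proof (elim CollectE exE conjE, intro CollectI exI conjI ballI)
  fix \<phi> assume c: "continuous_on (closure D) \<phi>" and p: "\<forall>x\<in>closure D. 0 < \<phi> x"
    and i: "\<forall>x\<in>D. nonlocal_op D K \<phi> x + a x * \<phi> x + l * \<phi> x \<le> 0" and ll: "l' \<le> l"
  show "continuous_on (closure D) \<phi>" "\<And>x. x \<in> closure D \<Longrightarrow> 0 < \<phi> x" using c p by auto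
  fix x assume x: "x \<in> D"
  have "l' * \<phi> x \<le> l * \<phi> x" using p x closure_subset ll by (intro mult_right_mono) force+
  then show "nonlocal_op D K \<phi> x + a x * \<phi> x + l' * \<phi> x \<le> 0" using i x by force
qed

lemma lset_less:
  assumes "D \<subseteq> \<Omega>" "open D" "x \<in> D" "l < lambda_p D K a"
  shows "l \<in> lset D"
proof -
  obtain l2 where "l2 \<in> lset D" "l < l2"
    using assms lset_ne lset_bdd less_cSup_iff unfolding lambda_p_lset by metis
  then show ?thesis using lset_down by force
qed

lemma lset_mono:
  assumes D: "D1 \<subseteq> D2" "D2 \<subseteq> \<Omega>" "open D1" "open D2" and l: "l \<in> lset D2"
  shows "l \<in> lset D1"
proof -
  from l obtain \<phi> where c: "continuous_on (closure D2) \<phi>" and p: "\<forall>x\<in>closure D2. \<phi> x > 0"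
    and ineq: "\<forall>x\<in>D2. nonlocal_op D2 K \<phi> x + a x * \<phi> x + l * \<phi> x \<le> 0"
    unfolding lset_def by blast
  have cl: "closure D1 \<subseteq> closure D2" using D(1) closure_mono by blast
  have c1: "continuous_on (closure D1) \<phi>" using c cl continuous_on_subset by blast
  show ?thesis unfolding lset_def
  proof (intro CollectI exI[of _ \<phi>] conjI ballI c1)
    show "0 < \<phi> x" if "x \<in> closure D1" for x using p cl that by blast
    fix x assume x1: "x \<in> D1"
    then have x2: "x \<in> D2" and xO: "x \<in> \<Omega>" using D by auto
    have "nonlocal_op D1 K \<phi> x \<le> nonlocal_op D2 K \<phi> x"
      unfolding nonlocal_op_def set_lebesgue_integral_def
    proof (rule integral_mono)
      show "integrable lebesgue (\<lambda>y. indicator D1 y *\<^sub>R (K x y * \<phi> y))"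
        using integrable_L[OF xO _ D(3) c1] D by auto
      show "integrable lebesgue (\<lambda>y. indicator D2 y *\<^sub>R (K x y * \<phi> y))"
        using integrable_L[OF xO D(2) D(4) c] .
      fix y
      show "indicator D1 y *\<^sub>R (K x y * \<phi> y) \<le> indicator D2 y *\<^sub>R (K x y * \<phi> y)"
      proof (cases "y \<in> D2")
        case True
        then have "K x y * \<phi> y \<ge> 0" using K_nonneg[OF xO] D p closure_subset by (meson mult_nonneg_nonneg less_imp_le subsetD)
        then show ?thesis using True D by (auto simp: indicator_def)
      next
        case False
        then show ?thesis using D by (auto simp: indicator_def)
      qed
    qed
    then show "nonlocal_op D1 K \<phi> x + a x * \<phi> x + l * \<phi> x \<le> 0" using ineq x2 by force
  qed
qed

lemma lam_mono:
  assumes "D1 \<subseteq> D2" "D2 \<subseteq> \<Omega>" "open D1" "open D2" "x \<in> D1"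
  shows "lambda_p D2 K a \<le> lambda_p D1 K a"
  unfolding lambda_p_lset
  by (rule cSup_subset_mono) (use assms lset_ne lset_bdd lset_mono in auto)

end
lemma tri_lt:
  fixes p q y :: "'a::metric_space"
  assumes "dist p q \<le> a" "dist p y < b" "a + b \<le> c"
  shows "dist q y < c"
proof -
  have "dist q y \<le> dist p q + dist p y" using dist_triangle[of q y p] by (simp add: dist_commute)
  then show ?thesis using assms by linarith
qed

locale kctx2 = kctx +
  fixes \<Omega>n :: "nat \<Rightarrow> 'a set"
  assumes sub_dom: "\<And>n. is_domain (\<Omega>n n) \<and> \<Omega>n n \<subseteq> \<Omega>"
    and incr: "\<And>n. \<Omega>n n \<subseteq> \<Omega>n (Suc n)"
    and exhaust: "(\<Union>n. \<Omega>n n) = \<Omega>"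
begin

lemma Omn_open: "open (\<Omega>n n)" and Omn_sub: "\<Omega>n n \<subseteq> \<Omega>" and Omn_ne: "\<Omega>n n \<noteq> {}"
  using sub_dom[of n] by (auto simp: is_domain_def)

lemma Omn_mono: assumes "m \<le> n" shows "\<Omega>n m \<subseteq> \<Omega>n n"
  using lift_Suc_mono_le[of \<Omega>n, OF incr assms] .

lemma compact_event:
  assumes C: "compact C" "C \<subseteq> \<Omega>"
  shows "\<exists>N. \<forall>n\<ge>N. C \<subseteq> \<Omega>n n"
proof -
  have cover: "C \<subseteq> (\<Union>n\<in>UNIV. \<Omega>n n)" using C exhaust by auto
  obtain J where J0: "J \<subseteq> UNIV" and J: "finite J" "C \<subseteq> (\<Union>n\<in>J. \<Omega>n n)"
    by (rule compactE_image[OF C(1), of UNIV \<Omega>n, OF Omn_open cover])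
  show ?thesis
  proof (intro exI allI impI)
    fix n assume n: "Max (insert 0 J) \<le> n"
    have "\<Omega>n j \<subseteq> \<Omega>n n" if "j \<in> J" for j
    proof -
      have "j \<le> Max (insert 0 J)" using that J(1) by (intro Max_ge) auto
      then show ?thesis using n by (intro Omn_mono) linarith
    qed
    then show "C \<subseteq> \<Omega>n n" using J(2) by blast
  qed
qed

lemma point_event: "x \<in> \<Omega> \<Longrightarrow> \<exists>N. \<forall>n\<ge>N. x \<in> \<Omega>n n"
  using compact_event[of "{x}"] by auto

lemma choose_s:
  assumes p': "p' \<in> \<Omega>" and d: "dist p p' < r1/2"
  shows "\<exists>s' N'. 0 < s' \<and> s' \<le> r1/2 \<and> s' + dist p p' < r1/2 \<and> (\<forall>n\<ge>N'. cball p' s' \<subseteq> \<Omega>n n)"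
proof -
  obtain e where e: "e > 0" "cball p' e \<subseteq> \<Omega>" using Om_open p' open_contains_cball by blast
  define s' where "s' = min e (min (r1/2) ((r1/2 - dist p p')/2))"
  have s'1: "s' \<le> e" "s' \<le> r1/2" "s' \<le> (r1/2 - dist p p')/2"
    unfolding s'_def by (rule min.cobounded1, rule order_trans[OF min.cobounded2 min.cobounded1],
      rule order_trans[OF min.cobounded2 min.cobounded2])
  have s'0: "0 < s'" using e d radii by (simp add: s'_def)
  have s': "0 < s'" "s' \<le> r1/2" "s' + dist p p' < r1/2" "s' \<le> e"
  proof -
    show "0 < s'" by (rule s'0)
    show "s' \<le> r1/2" by (rule s'1(2))
    show "s' \<le> e" by (rule s'1(1))
    have h: "2 * s' \<le> 2 * ((r1/2 - dist p p')/2)" using s'1(3) by (rule mult_left_mono) simp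
    then have h2: "2 * s' \<le> r1/2 - dist p p'" by simp
    show "s' + dist p p' < r1/2" using s'0 h2 by linarith
  qed
  have "cball p' s' \<subseteq> cball p' e" using s'(4) by (auto simp: mem_cball)
  then have "cball p' s' \<subseteq> \<Omega>" using e by blast
  then obtain N' where "\<forall>n\<ge>N'. cball p' s' \<subseteq> \<Omega>n n" using compact_event[OF compact_cball] by blast
  then show ?thesis using s' by blast
qed

end

lemma ennreal_div_aux:
  fixes I :: ennreal and c X :: real
  assumes "0 < c" "ennreal c * I \<le> ennreal X"
  shows "I \<le> ennreal (X / c)"
proof -
  have one: "ennreal (1/c) * ennreal c = 1"
    using assms by (simp add: ennreal_mult[symmetric])
  have "I = ennreal (1/c) * (ennreal c * I)" by (simp add: one mult.assoc[symmetric])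
  also have "\<dots> \<le> ennreal (1/c) * ennreal X" using assms(2) by (rule mult_left_mono) simp
  also have "\<dots> \<le> ennreal (X / c)"
  proof (cases "X \<ge> 0")
    case True
    then have "ennreal (1/c) * ennreal X = ennreal (1/c * X)"
      using assms(1) by (intro ennreal_mult[symmetric]) auto
    then show ?thesis by simp
  next
    case False
    then show ?thesis by (simp add: ennreal_neg)
  qed
  finally show ?thesis .
qed

lemma ennreal_INF_aux:
  fixes X :: ennreal and c :: real and f :: "nat \<Rightarrow> ennreal"
  assumes "0 < c" "\<And>n. n \<in> S \<Longrightarrow> X \<le> ennreal c * f n"
  shows "X \<le> ennreal c * (INF n\<in>S. f n)"
proof -
  have one: "ennreal (1/c) * ennreal c = 1"
    using assms by (simp add: ennreal_mult[symmetric])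
  have "ennreal (1/c) * X \<le> f n" if "n \<in> S" for n
  proof -
    have "ennreal (1/c) * X \<le> ennreal (1/c) * (ennreal c * f n)"
      using assms(2)[OF that] by (rule mult_left_mono) simp
    also have "\<dots> = f n" by (simp add: one mult.assoc[symmetric])
    finally show ?thesis .
  qed
  then have "ennreal (1/c) * X \<le> (INF n\<in>S. f n)" by (rule INF_greatest)
  then have "ennreal c * (ennreal (1/c) * X) \<le> ennreal c * (INF n\<in>S. f n)"
    by (rule mult_left_mono) simp
  moreover have "ennreal c * (ennreal (1/c) * X) = X"
  proof -
    have "ennreal c * (ennreal (1/c) * X) = (ennreal (1/c) * ennreal c) * X" by (simp only: ac_simps)
    then show ?thesis by (simp add: one)
  qed
  ultimately show ?thesis by simp
qed



locale hcore = kctx2 +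
  fixes \<phi> :: "nat \<Rightarrow> 'a \<Rightarrow> real" and \<mu> \<delta> B :: real and x0 :: 'a and s0 :: real and N0 :: nat
  assumes phi_cont: "\<And>n. continuous_on (closure (\<Omega>n n)) (\<phi> n)"
    and phi_pos: "\<And>n x. x \<in> closure (\<Omega>n n) \<Longrightarrow> \<phi> n x > 0"
    and phi_ineq: "\<And>n x. x \<in> \<Omega>n n \<Longrightarrow> nonlocal_op (\<Omega>n n) K (\<phi> n) x + a x * \<phi> n x + \<mu> * \<phi> n x \<le> 0"
    and delta: "\<delta> > 0" "\<And>x. x \<in> \<Omega> \<Longrightarrow> \<delta> \<le> - a x - \<mu>"
    and Bb: "B > 0" "\<And>x. x \<in> \<Omega> \<Longrightarrow> - a x - \<mu> \<le> B"
    and x0: "x0 \<in> \<Omega>" and s0: "0 < s0" "s0 \<le> r1/2"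
    and N0: "\<And>n. N0 \<le> n \<Longrightarrow> cball x0 s0 \<subseteq> \<Omega>n n"
    and norm1: "\<And>n. N0 \<le> n \<Longrightarrow>
       (\<integral>\<^sup>+ y. ennreal (indicator (\<Omega>n n) y * \<phi> n y) * indicator (ball x0 s0) y \<partial>lebesgue) = 1"
begin

definition "b x = - a x - \<mu>"
definition "\<kappa> = B / c0"
definition "u n y = ennreal (indicator (\<Omega>n n) y * \<phi> n y)"

lemma Om_sets[measurable]: "\<Omega> \<in> sets lebesgue" using Om_open by simp
lemma Omn_sets[measurable]: "\<Omega>n n \<in> sets lebesgue" using Omn_open by simp
lemma ball_sets[measurable]: "ball (p::'a) r \<in> sets lebesgue" by simp
lemma cball_sets[measurable]: "cball (p::'a) r \<in> sets lebesgue"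
  using borel_closed[OF closed_cball] by simp

lemma kappa_pos: "\<kappa> > 0" using Bb const_bds by (simp add: \<kappa>_def)

lemma phi_pos': "x \<in> \<Omega>n n \<Longrightarrow> \<phi> n x > 0"
  using phi_pos closure_subset by blast

lemma u_meas[measurable]: "u n \<in> borel_measurable lebesgue"
proof -
  have [measurable]: "(\<lambda>y. indicator (\<Omega>n n) y * \<phi> n y) \<in> borel_measurable lebesgue"
    by (rule meas_cont[OF Omn_open phi_cont])
  have "u n = (\<lambda>y. ennreal (indicator (\<Omega>n n) y * \<phi> n y))" by (simp add: fun_eq_iff u_def)
  then show ?thesis by simp
qed

lemma u_in: "y \<in> \<Omega>n n \<Longrightarrow> u n y = ennreal (\<phi> n y)"
  by (simp add: u_def)

lemma H0:
  assumes x: "x \<in> \<Omega>n n"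
  shows "(\<integral>\<^sup>+ y. ennreal (indicator (\<Omega>n n) y * K x y * \<phi> n y) \<partial>lebesgue) \<le> ennreal (b x * \<phi> n x)"
proof -
  have xO: "x \<in> \<Omega>" using x Omn_sub by auto
  have "(\<integral>\<^sup>+ y. ennreal (indicator (\<Omega>n n) y * K x y * \<phi> n y) \<partial>lebesgue) = ennreal (nonlocal_op (\<Omega>n n) K (\<phi> n) x)"
    by (rule L_nn[symmetric, OF xO Omn_sub Omn_open phi_cont]) (use phi_pos' in force)
  also have "\<dots> \<le> ennreal (b x * \<phi> n x)"
  proof (rule ennreal_leI)
    have "b x * \<phi> n x = - (a x * \<phi> n x) - \<mu> * \<phi> n x" by (simp add: b_def algebra_simps)
    then show "nonlocal_op (\<Omega>n n) K (\<phi> n) x \<le> b x * \<phi> n x" using phi_ineq[OF x] by linarith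
  qed
  finally show ?thesis .
qed

lemma b_pos: "x \<in> \<Omega> \<Longrightarrow> b x > 0" and b_le: "x \<in> \<Omega> \<Longrightarrow> b x \<le> B"
  using delta Bb by (force simp: b_def)+

lemma H1:
  assumes x: "x \<in> \<Omega>n n"
  shows "(\<integral>\<^sup>+ y. u n y * indicator (ball x r1) y \<partial>lebesgue) \<le> ennreal (\<kappa> * \<phi> n x)"
proof -
  have xO: "x \<in> \<Omega>" using x Omn_sub by auto
  have "ennreal c0 * (\<integral>\<^sup>+ y. u n y * indicator (ball x r1) y \<partial>lebesgue)
      = (\<integral>\<^sup>+ y. ennreal c0 * (u n y * indicator (ball x r1) y) \<partial>lebesgue)"
    by (rule nn_integral_cmult[symmetric]) measurable
  also have "\<dots> \<le> (\<integral>\<^sup>+ y. ennreal (indicator (\<Omega>n n) y * K x y * \<phi> n y) \<partial>lebesgue)"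
  proof (rule nn_integral_mono)
    fix y
    show "ennreal c0 * (u n y * indicator (ball x r1) y) \<le> ennreal (indicator (\<Omega>n n) y * K x y * \<phi> n y)"
    proof (cases "y \<in> \<Omega>n n \<and> y \<in> ball x r1")
      case True
      then have yO: "y \<in> \<Omega>" using Omn_sub by auto
      have "c0 * \<phi> n y \<le> K x y * \<phi> n y"
        using K_near[OF xO yO] True phi_pos'[of y n] by (intro mult_right_mono) auto
      moreover have "0 \<le> K x y * \<phi> n y"
        using K_nonneg[OF xO yO] phi_pos'[of y n] True by simp
      ultimately show ?thesis using True const_bds phi_pos'[of y n]
        by (simp add: u_def ennreal_mult[symmetric])
    next
      case False
      then show ?thesis by (auto simp: u_def)
    qed
  qed
  also have "\<dots> \<le> ennreal (b x * \<phi> n x)" by (rule H0[OF x])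
  also have "\<dots> \<le> ennreal (B * \<phi> n x)"
    using b_le[OF xO] phi_pos'[OF x] by (intro ennreal_leI mult_right_mono) auto
  finally have "ennreal c0 * (\<integral>\<^sup>+ y. u n y * indicator (ball x r1) y \<partial>lebesgue) \<le> ennreal (B * \<phi> n x)" .
  from ennreal_div_aux[OF _ this] const_bds show ?thesis by (simp add: \<kappa>_def)
qed

definition "U p \<longleftrightarrow> (\<exists>s M N. 0 < s \<and> s \<le> r1/2 \<and>
   (\<forall>n\<ge>N. cball p s \<subseteq> \<Omega>n n \<and> (\<integral>\<^sup>+ y. u n y * indicator (ball p s) y \<partial>lebesgue) \<le> ennreal M))"

definition "Lw p \<longleftrightarrow> (\<exists>s c N. 0 < s \<and> s \<le> r1/2 \<and> 0 < c \<and>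
   (\<forall>n\<ge>N. cball p s \<subseteq> \<Omega>n n \<and> (\<forall>y\<in>ball p s. c \<le> \<phi> n y)))"

lemma mball: "0 < s \<Longrightarrow> emeasure lebesgue (ball (p::'a) s) = ennreal (measure lebesgue (ball p s))"
      "0 < s \<Longrightarrow> measure lebesgue (ball (p::'a) s) > 0"
  by (simp_all add: measure_def emeasure_ball)

lemma H3:
  assumes "U p"
  shows "\<exists>M N. \<forall>n\<ge>N. (\<integral>\<^sup>+ y. u n y * indicator (ball p (r1/2)) y \<partial>lebesgue) \<le> ennreal M"
proof -
  obtain s M N where s: "0 < s" "s \<le> r1/2"
    and MN: "\<And>n. n \<ge> N \<Longrightarrow> cball p s \<subseteq> \<Omega>n n \<and> (\<integral>\<^sup>+ y. u n y * indicator (ball p s) y \<partial>lebesgue) \<le> ennreal M"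
    using assms unfolding U_def by blast
  define V where "V = measure lebesgue (ball p s)"
  have V: "V > 0" "emeasure lebesgue (ball p s) = ennreal V" using mball[OF s(1)] by (auto simp: V_def)
  define M1 where "M1 = (\<bar>M\<bar> + 1) / V"
  have M1: "M1 > 0" using V by (simp add: M1_def add_pos_nonneg)
  have "(\<integral>\<^sup>+ y. u n y * indicator (ball p (r1/2)) y \<partial>lebesgue) \<le> ennreal (\<kappa> * M1)" if n: "n \<ge> N" for n
  proof -
    have sub: "ball p s \<subseteq> \<Omega>n n" using MN[OF n] by auto
    have "\<exists>q\<in>ball p s. \<phi> n q \<le> M1"
    proof (rule ccontr)
      assume "\<not> ?thesis"
      then have gt: "\<And>q. q \<in> ball p s \<Longrightarrow> M1 < \<phi> n q" by force
      have MV: "M1 * V = \<bar>M\<bar> + 1" using V by (simp add: M1_def)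
      have "ennreal (\<bar>M\<bar> + 1) = ennreal M1 * emeasure lebesgue (ball p s)"
        using V M1 MV by (simp add: ennreal_mult[symmetric])
      also have "\<dots> = (\<integral>\<^sup>+ y. ennreal M1 * indicator (ball p s) y \<partial>lebesgue)"
        by (rule nn_integral_cmult_indicator[symmetric]) simp
      also have "\<dots> \<le> (\<integral>\<^sup>+ y. u n y * indicator (ball p s) y \<partial>lebesgue)"
      proof (rule nn_integral_mono)
        fix y show "ennreal M1 * indicator (ball p s) y \<le> u n y * indicator (ball p s) y"
        proof (cases "y \<in> ball p s")
          case True
          then have "y \<in> \<Omega>n n" using sub by auto
          then show ?thesis using True less_imp_le[OF gt[OF True]] by (simp add: u_in ennreal_leI)
        qed simp
      qed
      also have "\<dots> \<le> ennreal M" using MN[OF n] by blast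
      also have "\<dots> \<le> ennreal \<bar>M\<bar>" by (rule ennreal_leI) simp
      finally have "ennreal (\<bar>M\<bar> + 1) \<le> ennreal \<bar>M\<bar>" .
      then have "\<bar>M\<bar> + 1 \<le> \<bar>M\<bar>" by simp
      then show False by simp
    qed
    then obtain q where q: "q \<in> ball p s" "\<phi> n q \<le> M1" by blast
    have qn: "q \<in> \<Omega>n n" using q sub by auto
    have "(\<integral>\<^sup>+ y. u n y * indicator (ball p (r1/2)) y \<partial>lebesgue) \<le> (\<integral>\<^sup>+ y. u n y * indicator (ball q r1) y \<partial>lebesgue)"
    proof (rule nn_integral_mono)
      fix y
      have "y \<in> ball q r1" if "y \<in> ball p (r1/2)"
        using tri_lt[of p q s y "r1/2" r1] q(1) s that by (simp add: mem_ball)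
      then show "u n y * indicator (ball p (r1/2)) y \<le> u n y * indicator (ball q r1) y"
        by (cases "y \<in> ball p (r1/2)") (auto simp: indicator_def)
    qed
    also have "\<dots> \<le> ennreal (\<kappa> * \<phi> n q)" by (rule H1[OF qn])
    also have "\<dots> \<le> ennreal (\<kappa> * M1)" using q(2) kappa_pos by (intro ennreal_leI mult_left_mono) auto
    finally show ?thesis .
  qed
  then show ?thesis by blast
qed

lemma H4:
  assumes "U p" "p' \<in> \<Omega>" "dist p p' < r1/2"
  shows "U p'"
proof -
  obtain M N where MN: "\<And>n. n \<ge> N \<Longrightarrow> (\<integral>\<^sup>+ y. u n y * indicator (ball p (r1/2)) y \<partial>lebesgue) \<le> ennreal M"
    using H3[OF assms(1)] by blast
  obtain s' N' where s': "0 < s'" "s' \<le> r1/2" "s' + dist p p' < r1/2" "\<And>n. n \<ge> N' \<Longrightarrow> cball p' s' \<subseteq> \<Omega>n n"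
    using choose_s[OF assms(2,3)] by blast
  have "cball p' s' \<subseteq> \<Omega>n n \<and> (\<integral>\<^sup>+ y. u n y * indicator (ball p' s') y \<partial>lebesgue) \<le> ennreal M"
    if n: "n \<ge> max N N'" for n
  proof
    show "cball p' s' \<subseteq> \<Omega>n n" using s'(4) n by auto
    have "(\<integral>\<^sup>+ y. u n y * indicator (ball p' s') y \<partial>lebesgue) \<le> (\<integral>\<^sup>+ y. u n y * indicator (ball p (r1/2)) y \<partial>lebesgue)"
    proof (rule nn_integral_mono)
      fix y
      have "y \<in> ball p (r1/2)" if "y \<in> ball p' s'"
        using tri_lt[of p' p "dist p p'" y s' "r1/2"] s' that by (simp add: mem_ball dist_commute)
      then show "u n y * indicator (ball p' s') y \<le> u n y * indicator (ball p (r1/2)) y"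
        by (cases "y \<in> ball p' s'") (auto simp: indicator_def)
    qed
    also have "\<dots> \<le> ennreal M" using MN n by auto
    finally show "(\<integral>\<^sup>+ y. u n y * indicator (ball p' s') y \<partial>lebesgue) \<le> ennreal M" .
  qed
  then show ?thesis unfolding U_def using s'(1,2) by blast
qed

lemma H5:
  assumes "Lw p" "p' \<in> \<Omega>" "dist p p' < r1/2"
  shows "Lw p'"
proof -
  obtain s c N where s: "0 < s" "s \<le> r1/2" "0 < c"
    and cN: "\<And>n. n \<ge> N \<Longrightarrow> cball p s \<subseteq> \<Omega>n n \<and> (\<forall>y\<in>ball p s. c \<le> \<phi> n y)"
    using assms(1) unfolding Lw_def by blast
  obtain s' N' where s': "0 < s'" "s' \<le> r1/2" "s' + dist p p' < r1/2" "\<And>n. n \<ge> N' \<Longrightarrow> cball p' s' \<subseteq> \<Omega>n n"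
    using choose_s[OF assms(2,3)] by blast
  define V where "V = measure lebesgue (ball p s)"
  have V: "V > 0" "emeasure lebesgue (ball p s) = ennreal V" using mball[OF s(1)] by (auto simp: V_def)
  have "cball p' s' \<subseteq> \<Omega>n n \<and> (\<forall>y\<in>ball p' s'. c * V / \<kappa> \<le> \<phi> n y)"
    if n: "n \<ge> max N N'" for n
  proof (intro conjI ballI)
    show "cball p' s' \<subseteq> \<Omega>n n" using s'(4) n by auto
    fix y assume y: "y \<in> ball p' s'"
    then have yn: "y \<in> \<Omega>n n" using s'(4)[of n] n ball_subset_cball by auto
    have Nn: "N \<le> n" using n by simp
    have sub: "ball p s \<subseteq> \<Omega>n n" using cN[OF Nn] ball_subset_cball[of p s] by blast
    have "ennreal (c * V) = ennreal c * emeasure lebesgue (ball p s)"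
      using V s by (simp add: ennreal_mult)
    also have "\<dots> = (\<integral>\<^sup>+ w. ennreal c * indicator (ball p s) w \<partial>lebesgue)"
      by (rule nn_integral_cmult_indicator[symmetric]) simp
    also have "\<dots> \<le> (\<integral>\<^sup>+ w. u n w * indicator (ball y r1) w \<partial>lebesgue)"
    proof (rule nn_integral_mono)
      fix w
      show "ennreal c * indicator (ball p s) w \<le> u n w * indicator (ball y r1) w"
      proof (cases "w \<in> ball p s")
        case True
        have "dist p' w < dist p p' + s"
          using tri_lt[of p p' "dist p p'" w s "dist p p' + s"] True by (simp add: mem_ball)
        then have "dist y w < r1"
          using tri_lt[of p' y s' w "dist p p' + s" r1] y s s' by (simp add: mem_ball)
        moreover have wn: "w \<in> \<Omega>n n" using True sub by blast
        moreover have "c \<le> \<phi> n w" using cN[OF Nn] True by blast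
        ultimately show ?thesis using True by (simp add: u_in indicator_def mem_ball ennreal_leI)
      qed simp
    qed
    also have "\<dots> \<le> ennreal (\<kappa> * \<phi> n y)" by (rule H1[OF yn])
    finally have le: "ennreal (c * V) \<le> ennreal (\<kappa> * \<phi> n y)" .
    have "0 \<le> \<kappa> * \<phi> n y" using kappa_pos phi_pos'[OF yn] by simp
    then have "c * V \<le> \<kappa> * \<phi> n y" using le by simp
    then show "c * V / \<kappa> \<le> \<phi> n y" using kappa_pos by (simp add: divide_le_eq mult.commute)
  qed
  moreover have "0 < c * V / \<kappa>" using s V kappa_pos by simp
  ultimately show ?thesis unfolding Lw_def using s'(1,2) by blast
qed

lemma H6: "U x0" "Lw x0"
proof -
  show "U x0" unfolding U_def
    using s0 N0 norm1 by (intro exI[of _ s0] exI[of _ 1] exI[of _ N0]) (auto simp: u_def)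
  have "cball x0 s0 \<subseteq> \<Omega>n n \<and> (\<forall>y\<in>ball x0 s0. 1/\<kappa> \<le> \<phi> n y)" if n: "n \<ge> N0" for n
  proof (intro conjI ballI)
    show "cball x0 s0 \<subseteq> \<Omega>n n" using N0 n by auto
    fix y assume y: "y \<in> ball x0 s0"
    then have yn: "y \<in> \<Omega>n n" using N0[OF n] by auto
    have "1 = (\<integral>\<^sup>+ w. u n w * indicator (ball x0 s0) w \<partial>lebesgue)"
      using norm1[OF n] by (simp add: u_def)
    also have "\<dots> \<le> (\<integral>\<^sup>+ w. u n w * indicator (ball y r1) w \<partial>lebesgue)"
    proof (rule nn_integral_mono)
      fix w
      have "w \<in> ball y r1" if "w \<in> ball x0 s0"
        using tri_lt[of x0 y s0 w s0 r1] y s0 that by (simp add: mem_ball)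
      then show "u n w * indicator (ball x0 s0) w \<le> u n w * indicator (ball y r1) w"
        by (cases "w \<in> ball x0 s0") (auto simp: indicator_def)
    qed
    also have "\<dots> \<le> ennreal (\<kappa> * \<phi> n y)" by (rule H1[OF yn])
    finally have "1 \<le> \<kappa> * \<phi> n y" by simp
    then show "1/\<kappa> \<le> \<phi> n y" using kappa_pos by (simp add: divide_le_eq mult.commute)
  qed
  then show "Lw x0" unfolding Lw_def using s0 kappa_pos
    by (intro exI[of _ s0] exI[of _ "1/\<kappa>"] exI[of _ N0]) auto
qed

lemma H7: assumes "p \<in> \<Omega>" shows "U p" "Lw p"
proof -
  define G where "G = {p\<in>\<Omega>. U p \<and> Lw p}"
  have prp: "p' \<in> G" if pG: "p \<in> G" and p': "p' \<in> \<Omega>" and d: "dist p p' < r1/2" for p p'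
  proof -
    have "U p" "Lw p" using pG by (simp_all add: G_def)
    then have "U p'" "Lw p'" using H4[OF _ p' d] H5[OF _ p' d] by simp_all
    then show ?thesis using p' by (simp add: G_def)
  qed
  define A where "A = (\<Union>p\<in>G. ball p (r1/2))"
  define Bs where "Bs = (\<Union>p\<in>\<Omega>-G. ball p (r1/2))"
  have "A \<inter> \<Omega> = {} \<or> Bs \<inter> \<Omega> = {}"
  proof (rule connectedD[OF Om_conn])
    show "open A" unfolding A_def by (rule open_UN) simp
    show "open Bs" unfolding Bs_def by (rule open_UN) simp
    show "A \<inter> Bs \<inter> \<Omega> = {}"
    proof (rule ccontr)
      assume "A \<inter> Bs \<inter> \<Omega> \<noteq> {}"
      then obtain x where xA: "x \<in> A" and xB: "x \<in> Bs" and xO: "x \<in> \<Omega>" by blast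
      from xA obtain p where p: "p \<in> G" "x \<in> ball p (r1/2)" unfolding A_def by blast
      from xB obtain q where q: "q \<in> \<Omega> - G" "x \<in> ball q (r1/2)" unfolding Bs_def by blast
      have "x \<in> G" using prp[OF p(1) xO] p(2) by simp
      moreover have "dist x q < r1/2" using q(2) by (simp add: dist_commute)
      ultimately have "q \<in> G" using prp q(1) by blast
      then show False using q(1) by blast
    qed
    show "\<Omega> \<subseteq> A \<union> Bs"
    proof
      fix p assume p: "p \<in> \<Omega>"
      have pb: "p \<in> ball p (r1/2)" using radii by simp
      show "p \<in> A \<union> Bs"
      proof (cases "p \<in> G")
        case True
        then show ?thesis using pb unfolding A_def by blast
      next
        case False
        then show ?thesis using pb p unfolding Bs_def by blast
      qed
    qed
  qed
  moreover have "x0 \<in> A \<inter> \<Omega>"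
  proof -
    have "x0 \<in> ball x0 (r1/2)" using radii by simp
    moreover have "x0 \<in> G" using x0 H6 by (simp add: G_def)
    ultimately show ?thesis using x0 unfolding A_def by blast
  qed
  ultimately have BO: "Bs \<inter> \<Omega> = {}" by blast
  have "p \<in> G"
  proof (rule ccontr)
    assume "p \<notin> G"
    moreover have "p \<in> ball p (r1/2)" using radii by simp
    ultimately have "p \<in> Bs" using assms unfolding Bs_def by blast
    then show False using BO assms by blast
  qed
  then show "U p" "Lw p" by (auto simp: G_def)
qed

end


context hcore begin

definition "\<psi>m m y = (INF n\<in>{m..}. u n y)"
definition "\<psi> y = (SUP m. \<psi>m m y)"

lemma psim_meas[measurable]: "\<psi>m m \<in> borel_measurable lebesgue"
proof -
  have "\<psi>m m = (\<lambda>y. INF n\<in>{m..}. u n y)" by (simp add: fun_eq_iff \<psi>m_def)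
  moreover have "(\<lambda>y. INF n\<in>{m..}. u n y) \<in> borel_measurable lebesgue"
    by (rule borel_measurable_INF) auto
  ultimately show ?thesis by simp
qed

lemma psi_meas[measurable]: "\<psi> \<in> borel_measurable lebesgue"
proof -
  have "\<psi> = (\<lambda>y. SUP m\<in>UNIV. \<psi>m m y)" by (simp add: fun_eq_iff \<psi>_def)
  moreover have "(\<lambda>y. SUP m\<in>UNIV. \<psi>m m y) \<in> borel_measurable lebesgue"
    by (rule borel_measurable_SUP) auto
  ultimately show ?thesis by simp
qed

lemma psim_mono: "m \<le> m' \<Longrightarrow> \<psi>m m y \<le> \<psi>m m' y"
  unfolding \<psi>m_def by (rule INF_superset_mono) auto

lemma psim_le_u: "m \<le> n \<Longrightarrow> \<psi>m m y \<le> u n y"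
  unfolding \<psi>m_def by (rule INF_lower) auto

lemma psim_le_psi: "\<psi>m m y \<le> \<psi> y"
  unfolding \<psi>_def by (rule SUP_upper) auto

lemma H9: assumes "y \<in> \<Omega>" shows "\<exists>c>0. ennreal c \<le> \<psi> y"
proof -
  obtain s c N where s: "0 < s" "0 < c" and cN: "\<And>n. n \<ge> N \<Longrightarrow> cball y s \<subseteq> \<Omega>n n \<and> (\<forall>w\<in>ball y s. c \<le> \<phi> n w)"
    using H7(2)[OF assms] unfolding Lw_def by blast
  have "ennreal c \<le> \<psi>m N y" unfolding \<psi>m_def
  proof (rule INF_greatest)
    fix n assume "n \<in> {N..}"
    then have n: "n \<ge> N" by simp
    have "y \<in> \<Omega>n n" "c \<le> \<phi> n y" using cN[OF n] s by auto
    then show "ennreal c \<le> u n y" by (simp add: u_in ennreal_leI)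
  qed
  then show ?thesis using s psim_le_psi[of N y] order_trans by blast
qed

lemma H10: assumes "p \<in> \<Omega>" shows "(\<integral>\<^sup>+ y. \<psi> y * indicator (\<Omega> \<inter> ball p (r1/2)) y \<partial>lebesgue) < \<infinity>"
proof -
  obtain M N where MN: "\<And>n. n \<ge> N \<Longrightarrow> (\<integral>\<^sup>+ y. u n y * indicator (ball p (r1/2)) y \<partial>lebesgue) \<le> ennreal M"
    using H3[OF H7(1)[OF assms]] by blast
  have inc: "incseq (\<lambda>m y. \<psi>m m y * indicator (\<Omega> \<inter> ball p (r1/2)) y)"
    by (auto simp: incseq_def le_fun_def intro!: mult_right_mono psim_mono)
  have "(\<integral>\<^sup>+ y. \<psi> y * indicator (\<Omega> \<inter> ball p (r1/2)) y \<partial>lebesgue)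
      = (\<integral>\<^sup>+ y. (SUP m. \<psi>m m y * indicator (\<Omega> \<inter> ball p (r1/2)) y) \<partial>lebesgue)"
    by (simp add: \<psi>_def SUP_mult_right_ennreal)
  also have "\<dots> = (SUP m. (\<integral>\<^sup>+ y. \<psi>m m y * indicator (\<Omega> \<inter> ball p (r1/2)) y \<partial>lebesgue))"
    by (rule nn_integral_monotone_convergence_SUP[OF inc]) measurable
  also have "\<dots> \<le> ennreal M"
  proof (rule SUP_least)
    fix m
    have "(\<integral>\<^sup>+ y. \<psi>m m y * indicator (\<Omega> \<inter> ball p (r1/2)) y \<partial>lebesgue)
        \<le> (\<integral>\<^sup>+ y. u (max m N) y * indicator (ball p (r1/2)) y \<partial>lebesgue)"
      by (rule nn_integral_mono) (auto simp: indicator_def intro: psim_le_u)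
    also have "\<dots> \<le> ennreal M" by (rule MN) simp
    finally show "(\<integral>\<^sup>+ y. \<psi>m m y * indicator (\<Omega> \<inter> ball p (r1/2)) y \<partial>lebesgue) \<le> ennreal M" .
  qed
  finally have "(\<integral>\<^sup>+ y. \<psi> y * indicator (\<Omega> \<inter> ball p (r1/2)) y \<partial>lebesgue) \<le> ennreal M" .
  then show ?thesis using ennreal_less_top[of M] by (auto intro: le_less_trans)
qed

lemma H11: "(\<integral>\<^sup>+ y. \<psi> y * indicator (\<Omega> \<inter> cball z R) y \<partial>lebesgue) < \<infinity>"
proof -
  have cpt: "compact (closure \<Omega> \<inter> cball z R)" by (simp add: closed_Int_compact)
  have cov: "closure \<Omega> \<inter> cball z R \<subseteq> (\<Union>p\<in>\<Omega>. ball p (r1/2))"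
  proof
    fix w assume "w \<in> closure \<Omega> \<inter> cball z R"
    then have wc: "w \<in> closure \<Omega>" by simp
    have "\<exists>p\<in>\<Omega>. dist p w < r1/2"
      using wc[unfolded closure_approachable, rule_format, of "r1/2"] radii by simp
    then obtain p where "p \<in> \<Omega>" "dist p w < r1/2" by blast
    then show "w \<in> (\<Union>p\<in>\<Omega>. ball p (r1/2))" by auto
  qed
  obtain J where J: "J \<subseteq> \<Omega>" "finite J" "closure \<Omega> \<inter> cball z R \<subseteq> (\<Union>p\<in>J. ball p (r1/2))"
    by (rule compactE_image[OF cpt, of \<Omega> "\<lambda>p. ball p (r1/2)", OF _ cov]) simp
  have "(\<integral>\<^sup>+ y. \<psi> y * indicator (\<Omega> \<inter> cball z R) y \<partial>lebesgue)
      \<le> (\<integral>\<^sup>+ y. (\<Sum>p\<in>J. \<psi> y * indicator (\<Omega> \<inter> ball p (r1/2)) y) \<partial>lebesgue)"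
  proof (rule nn_integral_mono)
    fix y
    show "\<psi> y * indicator (\<Omega> \<inter> cball z R) y \<le> (\<Sum>p\<in>J. \<psi> y * indicator (\<Omega> \<inter> ball p (r1/2)) y)"
    proof (cases "y \<in> \<Omega> \<inter> cball z R")
      case True
      then obtain p where p: "p \<in> J" "y \<in> ball p (r1/2)" using J(3) closure_subset by blast
      have "\<psi> y * indicator (\<Omega> \<inter> cball z R) y = \<psi> y * indicator (\<Omega> \<inter> ball p (r1/2)) y"
        using True p by (simp add: indicator_def)
      also have "\<dots> \<le> (\<Sum>p\<in>J. \<psi> y * indicator (\<Omega> \<inter> ball p (r1/2)) y)"
        by (rule member_le_sum[OF p(1) _ J(2)]) simp
      finally show ?thesis .
    qed simp
  qed
  also have "\<dots> = (\<Sum>p\<in>J. (\<integral>\<^sup>+ y. \<psi> y * indicator (\<Omega> \<inter> ball p (r1/2)) y \<partial>lebesgue))"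
    by (rule nn_integral_sum) measurable
  also have "\<dots> < \<infinity>" using H10 J(1,2) by (auto simp: subset_eq)
  finally show ?thesis .
qed

lemma H12:
  assumes x: "x \<in> \<Omega>"
  shows "(\<integral>\<^sup>+ y. ennreal (indicator \<Omega> y * K x y) * \<psi> y \<partial>lebesgue) \<le> ennreal (b x) * \<psi> x"
proof -
  have [measurable]: "(\<lambda>y. indicator \<Omega> y * K x y) \<in> borel_measurable lebesgue"
    by (rule meas_K[OF x]) (auto simp: Om_open)
  obtain Nx where Nx: "\<And>n. n \<ge> Nx \<Longrightarrow> x \<in> \<Omega>n n" using point_event[OF x] by blast
  have step: "(\<integral>\<^sup>+ y. ennreal (indicator \<Omega> y * K x y) * \<psi>m m y \<partial>lebesgue) \<le> ennreal (b x) * \<psi> x" for m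
  proof -
    define n0 where "n0 = max m Nx"
    have "(\<integral>\<^sup>+ y. ennreal (indicator \<Omega> y * K x y) * \<psi>m m y \<partial>lebesgue) \<le> ennreal (b x) * \<psi>m n0 x"
      unfolding \<psi>m_def[of n0]
    proof (rule ennreal_INF_aux[OF b_pos[OF x]])
      fix n assume "n \<in> {n0..}"
      then have n: "n \<ge> m" "n \<ge> Nx" by (auto simp: n0_def)
      have xn: "x \<in> \<Omega>n n" using Nx n by auto
      have "(\<integral>\<^sup>+ y. ennreal (indicator \<Omega> y * K x y) * \<psi>m m y \<partial>lebesgue)
          \<le> (\<integral>\<^sup>+ y. ennreal (indicator \<Omega> y * K x y) * u n y \<partial>lebesgue)"
        by (rule nn_integral_mono) (intro mult_left_mono psim_le_u n, simp)
      also have "\<dots> = (\<integral>\<^sup>+ y. ennreal (indicator (\<Omega>n n) y * K x y * \<phi> n y) \<partial>lebesgue)"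
      proof (rule nn_integral_cong)
        fix y
        show "ennreal (indicator \<Omega> y * K x y) * u n y = ennreal (indicator (\<Omega>n n) y * K x y * \<phi> n y)"
        proof (cases "y \<in> \<Omega>n n")
          case True
          then have "y \<in> \<Omega>" using Omn_sub by auto
          then show ?thesis using True K_nonneg[OF x] less_imp_le[OF phi_pos'[OF True]]
            by (simp add: u_in ennreal_mult)
        qed (simp add: u_def)
      qed
      also have "\<dots> \<le> ennreal (b x * \<phi> n x)" by (rule H0[OF xn])
      also have "\<dots> = ennreal (b x) * u n x"
        using less_imp_le[OF b_pos[OF x]] less_imp_le[OF phi_pos'[OF xn]] xn by (simp add: u_in ennreal_mult)
      finally show "(\<integral>\<^sup>+ y. ennreal (indicator \<Omega> y * K x y) * \<psi>m m y \<partial>lebesgue) \<le> ennreal (b x) * u n x" .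
    qed
    also have "\<dots> \<le> ennreal (b x) * \<psi> x" by (intro mult_left_mono psim_le_psi) simp
    finally show ?thesis .
  qed
  have inc: "incseq (\<lambda>m y. ennreal (indicator \<Omega> y * K x y) * \<psi>m m y)"
    by (auto simp: incseq_def le_fun_def intro!: mult_left_mono psim_mono)
  have "(\<integral>\<^sup>+ y. ennreal (indicator \<Omega> y * K x y) * \<psi> y \<partial>lebesgue)
      = (\<integral>\<^sup>+ y. (SUP m. ennreal (indicator \<Omega> y * K x y) * \<psi>m m y) \<partial>lebesgue)"
    by (simp add: \<psi>_def SUP_mult_left_ennreal)
  also have "\<dots> = (SUP m. (\<integral>\<^sup>+ y. ennreal (indicator \<Omega> y * K x y) * \<psi>m m y \<partial>lebesgue))"
    by (rule nn_integral_monotone_convergence_SUP[OF inc]) measurable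
  also have "\<dots> \<le> ennreal (b x) * \<psi> x" by (rule SUP_least) (rule step)
  finally show ?thesis .
qed

end


context hcore begin

definition "xs z = (if z \<in> \<Omega> then (\<lambda>k. z) else (SOME s. (\<forall>k. s k \<in> \<Omega>) \<and> s \<longlonglongrightarrow> z))"
definition "Kt z y = lim (\<lambda>k. indicator \<Omega> y * K (xs z k) y)"
definition "gd y \<longleftrightarrow> (y \<in> \<Omega> \<longrightarrow> uniformly_continuous_on \<Omega> (\<lambda>x. K x y))"

lemma AE_gd: "AE y in lebesgue. gd y"
  using K_ucont by (simp add: gd_def)

lemma xs': assumes "z \<in> closure \<Omega>" shows "(\<forall>k. xs z k \<in> \<Omega>) \<and> xs z \<longlonglongrightarrow> z"
proof (cases "z \<in> \<Omega>")
  case True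
  then show ?thesis by (simp add: xs_def)
next
  case False
  have ex: "\<exists>s. (\<forall>k. s k \<in> \<Omega>) \<and> s \<longlonglongrightarrow> z" using assms by (simp add: closure_sequential)
  show ?thesis using False someI_ex[OF ex] by (simp add: xs_def)
qed

lemma xs: assumes "z \<in> closure \<Omega>" shows "\<And>k. xs z k \<in> \<Omega>" "xs z \<longlonglongrightarrow> z"
  using xs'[OF assms] by auto

lemma Kt_Om: "z \<in> \<Omega> \<Longrightarrow> Kt z y = indicator \<Omega> y * K z y"
  by (simp add: Kt_def xs_def limI[OF tendsto_const])

lemma Kt_out: "y \<notin> \<Omega> \<Longrightarrow> Kt z y = 0"
  by (simp add: Kt_def limI[OF tendsto_const])

lemma Kt_g:
  assumes y: "y \<in> \<Omega>" "gd y"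
  shows "\<exists>g. continuous_on (closure \<Omega>) g \<and> (\<forall>z\<in>closure \<Omega>. Kt z y = g z \<and> (\<lambda>k. K (xs z k) y) \<longlonglongrightarrow> g z)"
proof -
  have uc: "uniformly_continuous_on \<Omega> (\<lambda>x. K x y)" using y by (simp add: gd_def)
  obtain g where g: "uniformly_continuous_on (closure \<Omega>) g" "\<And>x. x \<in> \<Omega> \<Longrightarrow> K x y = g x"
    by (rule uniformly_continuous_on_extension_on_closure[OF uc]) (rule that)
  have gc: "continuous_on (closure \<Omega>) g" using g(1) uniformly_continuous_imp_continuous by blast
  have "Kt z y = g z \<and> (\<lambda>k. K (xs z k) y) \<longlonglongrightarrow> g z" if z: "z \<in> closure \<Omega>" for z
  proof -
    have "(\<lambda>k. g (xs z k)) \<longlonglongrightarrow> g z"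
      by (intro continuous_on_tendsto_compose[OF gc] always_eventually)
         (use xs[OF z] closure_subset z in auto)
    moreover have "(\<lambda>k. K (xs z k) y) = (\<lambda>k. g (xs z k))" using g(2) xs(1)[OF z] by auto
    ultimately have l: "(\<lambda>k. K (xs z k) y) \<longlonglongrightarrow> g z" by simp
    have "Kt z y = lim (\<lambda>k. K (xs z k) y)" using y by (simp add: Kt_def)
    then show ?thesis using limI[OF l] l by simp
  qed
  then show ?thesis using gc by blast
qed

lemma Kt_bounds:
  assumes z: "z \<in> closure \<Omega>" and y: "gd y"
  shows "0 \<le> Kt z y" "Kt z y \<le> C0 * indicator (\<Omega> \<inter> cball z r0) y"
    "c0 * indicator (\<Omega> \<inter> ball z r1) y \<le> Kt z y"
proof -
  have all: "0 \<le> Kt z y \<and> Kt z y \<le> C0 * indicator (\<Omega> \<inter> cball z r0) y \<and> c0 * indicator (\<Omega> \<inter> ball z r1) y \<le> Kt z y"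
  proof (cases "y \<in> \<Omega>")
    case False
    then show ?thesis by (simp add: Kt_out)
  next
    case True
    obtain g where "\<forall>z\<in>closure \<Omega>. Kt z y = g z \<and> (\<lambda>k. K (xs z k) y) \<longlonglongrightarrow> g z"
      using Kt_g[OF True y] by blast
    then have lim: "(\<lambda>k. K (xs z k) y) \<longlonglongrightarrow> Kt z y" using z by auto
    have xsO: "\<And>k. xs z k \<in> \<Omega>" using xs[OF z] by auto
    have nn: "0 \<le> Kt z y"
      by (rule LIMSEQ_le_const[OF lim], rule exI[of _ 0], intro allI impI, rule K_nonneg[OF xsO True])
    have up: "Kt z y \<le> C0 * indicator (\<Omega> \<inter> cball z r0) y"
    proof (cases "dist z y \<le> r0")
      case True
      have "Kt z y \<le> C0" by (rule LIMSEQ_le_const2[OF lim]) (rule exI[of _ 0], intro allI impI, rule K_leC0[OF xsO \<open>y \<in> \<Omega>\<close>])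
      then show ?thesis using True \<open>y \<in> \<Omega>\<close> by (simp add: indicator_def mem_cball)
    next
      case False
      have "\<forall>\<^sub>F k in sequentially. dist (xs z k) z < dist z y - r0"
        by (rule tendstoD[OF xs(2)[OF z]]) (use False in simp)
      then obtain N where N: "\<And>k. k \<ge> N \<Longrightarrow> dist (xs z k) z < dist z y - r0"
        by (auto simp: eventually_sequentially)
      have KN: "K (xs z k) y = 0" if "k \<ge> N" for k
      proof (rule K_far[OF xsO \<open>y \<in> \<Omega>\<close>])
        have "dist z y \<le> dist z (xs z k) + dist (xs z k) y" by (rule dist_triangle)
        then show "r0 \<le> dist (xs z k) y" using N[OF that] dist_commute[of z "xs z k"] by linarith
      qed
      have "Kt z y \<le> 0" by (rule LIMSEQ_le_const2[OF lim], rule exI[of _ N], intro allI impI, simp add: KN)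
      then show ?thesis using False by (simp add: indicator_def mem_cball)
    qed
    have low: "c0 * indicator (\<Omega> \<inter> ball z r1) y \<le> Kt z y"
    proof (cases "dist z y < r1")
      case True
      have "\<forall>\<^sub>F k in sequentially. dist (xs z k) z < r1 - dist z y"
        by (rule tendstoD[OF xs(2)[OF z]]) (use True in simp)
      then obtain N where N: "\<And>k. k \<ge> N \<Longrightarrow> dist (xs z k) z < r1 - dist z y"
        by (auto simp: eventually_sequentially)
      have KN: "c0 \<le> K (xs z k) y" if "k \<ge> N" for k
      proof (rule K_near[OF xsO \<open>y \<in> \<Omega>\<close>])
        have "dist (xs z k) y \<le> dist (xs z k) z + dist z y" by (rule dist_triangle)
        then show "dist (xs z k) y < r1" using N[OF that] by simp
      qed
      have "c0 \<le> Kt z y" by (rule LIMSEQ_le_const[OF lim], rule exI[of _ N], intro allI impI, rule KN)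
      then show ?thesis using True \<open>y \<in> \<Omega>\<close> by (simp add: indicator_def mem_ball)
    next
      case False
      then show ?thesis using nn by (simp add: indicator_def mem_ball)
    qed
    show ?thesis using nn up low by blast
  qed
  then show "0 \<le> Kt z y" "Kt z y \<le> C0 * indicator (\<Omega> \<inter> cball z r0) y"
    "c0 * indicator (\<Omega> \<inter> ball z r1) y \<le> Kt z y" by auto
qed

lemma Kt_meas[measurable]: assumes z: "z \<in> closure \<Omega>" shows "Kt z \<in> borel_measurable lebesgue"
proof -
  have "\<And>k. (\<lambda>y. indicator \<Omega> y * K (xs z k) y) \<in> borel_measurable lebesgue"
    using xs(1)[OF z] by (intro meas_K) (auto simp: Om_open)
  then have "(\<lambda>y. lim (\<lambda>k. indicator \<Omega> y * K (xs z k) y)) \<in> borel_measurable lebesgue"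
    by (rule borel_measurable_lim_metric)
  then show ?thesis by (simp add: Kt_def[abs_def])
qed


end


context hcore begin

definition "\<psi>r y = enn2real (\<psi> y)"

lemma psir_meas[measurable]: "\<psi>r \<in> borel_measurable lebesgue"
proof -
  have "\<psi>r = (\<lambda>y. enn2real (\<psi> y))" by (simp add: fun_eq_iff \<psi>r_def)
  then show ?thesis by simp
qed

lemma psir_nonneg: "0 \<le> \<psi>r y" by (simp add: \<psi>r_def)

lemma psir_le: "ennreal (\<psi>r y) \<le> \<psi> y"
  by (cases "\<psi> y = \<infinity>") (auto simp: \<psi>r_def ennreal_enn2real_if)

lemma AE_fin: "AE y in lebesgue. y \<in> \<Omega> \<inter> cball z R \<longrightarrow> \<psi> y \<noteq> \<infinity>"
proof -
  have m: "(\<lambda>y. \<psi> y * indicator (\<Omega> \<inter> cball z R) y) \<in> borel_measurable lebesgue" by measurable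
  have "AE y in lebesgue. \<psi> y * indicator (\<Omega> \<inter> cball z R) y \<noteq> \<infinity>"
    by (rule nn_integral_PInf_AE[OF m]) (use H11[of z R] in auto)
  then show ?thesis by eventually_elim (auto simp: indicator_def)
qed

lemma psir_eq: "\<psi> y \<noteq> \<infinity> \<Longrightarrow> ennreal (\<psi>r y) = \<psi> y"
  by (simp add: \<psi>r_def ennreal_enn2real_if)

lemma H19: "integrable lebesgue (\<lambda>y. \<psi>r y * indicator (\<Omega> \<inter> cball z R) y)"
proof (rule integrableI_bounded)
  show "(\<lambda>y. \<psi>r y * indicator (\<Omega> \<inter> cball z R) y) \<in> borel_measurable lebesgue" by measurable
  have "(\<integral>\<^sup>+ y. ennreal (norm (\<psi>r y * indicator (\<Omega> \<inter> cball z R) y)) \<partial>lebesgue)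
      \<le> (\<integral>\<^sup>+ y. \<psi> y * indicator (\<Omega> \<inter> cball z R) y \<partial>lebesgue)"
    by (rule nn_integral_mono) (auto simp: indicator_def psir_nonneg psir_le)
  also have "\<dots> < \<infinity>" by (rule H11)
  finally show "(\<integral>\<^sup>+ y. ennreal (norm (\<psi>r y * indicator (\<Omega> \<inter> cball z R) y)) \<partial>lebesgue) < \<infinity>" .
qed

definition "F z = integral\<^sup>L lebesgue (\<lambda>y. Kt z y * \<psi>r y)"

lemma Kt_dom:
  assumes z: "z \<in> closure \<Omega>" and y: "gd y" and R: "dist z z' + r0 \<le> R"
  shows "norm (Kt z y * \<psi>r y) \<le> C0 * (\<psi>r y * indicator (\<Omega> \<inter> cball z' R) y)"
proof -
  have "norm (Kt z y * \<psi>r y) = Kt z y * \<psi>r y"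
    using Kt_bounds(1)[OF z y] psir_nonneg by simp
  also have "\<dots> \<le> C0 * indicator (\<Omega> \<inter> cball z r0) y * \<psi>r y"
    using Kt_bounds(2)[OF z y] psir_nonneg by (rule mult_right_mono)
  also have "\<dots> \<le> C0 * (\<psi>r y * indicator (\<Omega> \<inter> cball z' R) y)"
  proof -
    have "y \<in> cball z' R" if "y \<in> cball z r0"
      using dist_triangle[of z' y z] dist_commute[of z' z] R that by (simp add: mem_cball)
    then show ?thesis using C0_pos psir_nonneg[of y] by (auto simp: indicator_def)
  qed
  finally show ?thesis .
qed

lemma integrable_F: assumes z: "z \<in> closure \<Omega>" shows "integrable lebesgue (\<lambda>y. Kt z y * \<psi>r y)"
proof (rule Bochner_Integration.integrable_bound)
  show "integrable lebesgue (\<lambda>y. C0 * (\<psi>r y * indicator (\<Omega> \<inter> cball z r0) y))"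
    by (intro integrable_mult_right H19)
  show "(\<lambda>y. Kt z y * \<psi>r y) \<in> borel_measurable lebesgue"
    using Kt_meas[OF z] psir_meas by (rule borel_measurable_times)
  show "AE y in lebesgue. norm (Kt z y * \<psi>r y) \<le> norm (C0 * (\<psi>r y * indicator (\<Omega> \<inter> cball z r0) y))"
    using AE_gd
  proof eventually_elim
    case (elim y)
    have "norm (Kt z y * \<psi>r y) \<le> C0 * (\<psi>r y * indicator (\<Omega> \<inter> cball z r0) y)"
      by (rule Kt_dom[OF z elim]) simp
    also have "\<dots> \<le> norm (C0 * (\<psi>r y * indicator (\<Omega> \<inter> cball z r0) y))" by simp
    finally show ?case .
  qed
qed

lemma F_nonneg: assumes z: "z \<in> closure \<Omega>" shows "0 \<le> F z"
proof -
  have "AE y in lebesgue. 0 \<le> Kt z y * \<psi>r y"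
    using AE_gd by eventually_elim (simp add: Kt_bounds(1)[OF z] psir_nonneg)
  then show ?thesis unfolding F_def by (rule integral_nonneg_AE)
qed


end


context hcore begin

lemma F_cont: "continuous_on (closure \<Omega>) F"
proof (rule continuous_on_sequentiallyI)
  fix v a0 assume v0: "\<forall>n. v n \<in> closure \<Omega>" and a0: "a0 \<in> closure \<Omega>" and lim: "v \<longlonglongrightarrow> a0"
  have v: "\<And>n. v n \<in> closure \<Omega>" using v0 by blast
  have "Bseq v" using lim by (intro convergent_imp_Bseq) (auto simp: convergent_def)
  then obtain Kb where Kb: "\<And>n. norm (v n) \<le> Kb" by (auto simp: Bseq_def)
  define R where "R = Kb + norm a0 + r0"
  have dR: "dist (v n) a0 + r0 \<le> R" for n
    using Kb[of n] norm_triangle_ineq4[of "v n" a0] by (simp add: R_def dist_norm)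
  show "(\<lambda>n. F (v n)) \<longlonglongrightarrow> F a0"
    unfolding F_def
  proof (rule integral_dominated_convergence[where w="\<lambda>y. C0 * (\<psi>r y * indicator (\<Omega> \<inter> cball a0 R) y)"])
    show "(\<lambda>y. Kt a0 y * \<psi>r y) \<in> borel_measurable lebesgue"
      using Kt_meas[OF a0] psir_meas by (rule borel_measurable_times)
    show "(\<lambda>y. Kt (v n) y * \<psi>r y) \<in> borel_measurable lebesgue" for n
      using Kt_meas[OF v] psir_meas by (rule borel_measurable_times)
    show "integrable lebesgue (\<lambda>y. C0 * (\<psi>r y * indicator (\<Omega> \<inter> cball a0 R) y))"
      by (intro integrable_mult_right H19)
    show "AE y in lebesgue. (\<lambda>n. Kt (v n) y * \<psi>r y) \<longlonglongrightarrow> Kt a0 y * \<psi>r y"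
      using AE_gd
    proof eventually_elim
      case (elim y)
      show ?case
      proof (cases "y \<in> \<Omega>")
        case True
        obtain g where g: "continuous_on (closure \<Omega>) g" "\<forall>z\<in>closure \<Omega>. Kt z y = g z"
          using Kt_g[OF True elim] by blast
        have "(\<lambda>n. g (v n)) \<longlonglongrightarrow> g a0"
          by (intro continuous_on_tendsto_compose[OF g(1)] always_eventually) (use v a0 lim in auto)
        then have "(\<lambda>n. Kt (v n) y) \<longlonglongrightarrow> Kt a0 y" using g(2) v a0 by simp
        then show ?thesis by (rule tendsto_mult_right)
      qed (simp add: Kt_out)
    qed
    show "AE y in lebesgue. norm (Kt (v n) y * \<psi>r y) \<le> C0 * (\<psi>r y * indicator (\<Omega> \<inter> cball a0 R) y)" for n
      using AE_gd by eventually_elim (rule Kt_dom[OF _ _ dR], use v in auto)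
  qed
qed


end


context hcore begin

lemma pos_meas_near:
  assumes z: "z \<in> closure \<Omega>" and r: "r > 0"
  shows "emeasure lebesgue (\<Omega> \<inter> ball z r) > 0"
proof -
  obtain w where w: "w \<in> \<Omega>" "dist w z < r" using z[unfolded closure_approachable, rule_format, OF r] by blast
  obtain e where e: "e > 0" "ball w e \<subseteq> \<Omega>" using Om_open w(1) open_contains_ball by blast
  define e' where "e' = min e (r - dist w z)"
  have e': "e' > 0" using e w by (simp add: e'_def)
  have "ball w e' \<subseteq> \<Omega> \<inter> ball z r"
  proof
    fix t assume "t \<in> ball w e'"
    then have "dist w t < e'" by simp
    then have "t \<in> ball w e" "dist z t < r" using dist_triangle[of z t w] dist_commute[of z w]
      by (auto simp: e'_def)
    then show "t \<in> \<Omega> \<inter> ball z r" using e by auto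
  qed
  then have "emeasure lebesgue (ball w e') \<le> emeasure lebesgue (\<Omega> \<inter> ball z r)"
    by (intro emeasure_mono) (auto simp: Om_open open_Int)
  moreover have "emeasure lebesgue (ball w e') > 0"
    using e' by (simp add: emeasure_ball)
  ultimately show ?thesis by simp
qed

lemma F_pos: assumes z: "z \<in> closure \<Omega>" shows "F z > 0"
proof (rule ccontr)
  assume "\<not> F z > 0"
  then have "F z = 0" using F_nonneg[OF z] by simp
  have nnAE: "AE y in lebesgue. 0 \<le> Kt z y * \<psi>r y"
    using AE_gd by eventually_elim (simp add: Kt_bounds(1)[OF z] psir_nonneg)
  have "AE y in lebesgue. Kt z y * \<psi>r y = 0"
    using integral_nonneg_eq_0_iff_AE[OF integrable_F[OF z] nnAE] \<open>F z = 0\<close> by (simp add: F_def)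
  then have "AE y in lebesgue. y \<notin> \<Omega> \<inter> ball z r1"
    using AE_gd AE_fin[of z r1]
  proof eventually_elim
    case (elim y)
    show ?case
    proof
      assume y: "y \<in> \<Omega> \<inter> ball z r1"
      have "c0 \<le> Kt z y" using Kt_bounds(3)[OF z elim(2)] y by simp
      then have k: "Kt z y > 0" using const_bds by simp
      obtain c where c: "c > 0" "ennreal c \<le> \<psi> y" using H9 y by blast
      have fin: "\<psi> y \<noteq> \<infinity>" using elim(3) y by auto
      have "0 < ennreal c" using c(1) by simp
      then have "0 < \<psi> y" using c(2) by (rule less_le_trans)
      moreover have "\<psi> y < top" using fin by (simp add: less_top)
      ultimately have "\<psi>r y > 0" unfolding \<psi>r_def by (simp add: enn2real_positive_iff)
      then show False using k elim(1) by simp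
    qed
  qed
  note AEn = this
  have eqN: "{x \<in> space lebesgue. \<not> (x \<notin> \<Omega> \<inter> ball z r1)} = \<Omega> \<inter> ball z r1" by auto
  have sN: "\<Omega> \<inter> ball z r1 \<in> sets lebesgue" by measurable
  have "emeasure lebesgue (\<Omega> \<inter> ball z r1) = 0"
    using AEn AE_iff_measurable[OF sN eqN] by blast
  moreover have "emeasure lebesgue (\<Omega> \<inter> ball z r1) > 0" by (rule pos_meas_near[OF z]) (use radii in simp)
  ultimately show False by (metis less_irrefl)
qed


end


context hcore begin

definition "\<phi>f y = F y / b y"

lemma b_cont: "continuous_on (closure \<Omega>) b"
  unfolding b_def[abs_def] by (intro continuous_intros a_cont)

lemma b_pos_cl: "z \<in> closure \<Omega> \<Longrightarrow> b z \<ge> \<delta>"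
  by (rule continuous_ge_on_closure[OF b_cont]) (use delta in \<open>auto simp: b_def\<close>)

lemma phif_cont: "continuous_on (closure \<Omega>) \<phi>f"
  unfolding \<phi>f_def[abs_def]
  by (intro continuous_on_divide F_cont b_cont) (use b_pos_cl delta in force)

lemma phif_pos: assumes "z \<in> closure \<Omega>" shows "\<phi>f z > 0"
proof -
  have "b z > 0" using b_pos_cl[OF assms] delta by linarith
  then show ?thesis using F_pos[OF assms] by (simp add: \<phi>f_def)
qed

lemma claimA: assumes y: "y \<in> \<Omega>" shows "ennreal (\<phi>f y) \<le> \<psi> y"
proof -
  have yc: "y \<in> closure \<Omega>" using y closure_subset by blast
  have "ennreal (F y) = (\<integral>\<^sup>+ w. ennreal (Kt y w * \<psi>r w) \<partial>lebesgue)"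
    unfolding F_def
    by (rule nn_integral_eq_integral[symmetric, OF integrable_F[OF yc]])
       (use AE_gd in \<open>eventually_elim, simp add: Kt_bounds[OF yc] psir_nonneg\<close>)
  also have "\<dots> \<le> (\<integral>\<^sup>+ w. ennreal (indicator \<Omega> w * K y w) * \<psi> w \<partial>lebesgue)"
  proof (rule nn_integral_mono)
    fix w
    have nn: "0 \<le> indicator \<Omega> w * K y w" using K_nonneg[OF y] by (simp add: indicator_def)
    have "ennreal (Kt y w * \<psi>r w) = ennreal (indicator \<Omega> w * K y w) * ennreal (\<psi>r w)"
      using nn psir_nonneg by (simp add: Kt_Om[OF y] ennreal_mult)
    also have "\<dots> \<le> ennreal (indicator \<Omega> w * K y w) * \<psi> w"
      by (intro mult_left_mono psir_le) simp
    finally show "ennreal (Kt y w * \<psi>r w) \<le> ennreal (indicator \<Omega> w * K y w) * \<psi> w" .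
  qed
  also have "\<dots> \<le> ennreal (b y) * \<psi> y" by (rule H12[OF y])
  finally have Fle: "ennreal (F y) \<le> ennreal (b y) * \<psi> y" .
  have one: "ennreal (1 / b y) * ennreal (b y) = 1"
    using b_pos[OF y] by (simp add: ennreal_mult[symmetric])
  have "ennreal (\<phi>f y) = ennreal (1 / b y) * ennreal (F y)"
    using b_pos[OF y] F_nonneg[OF yc] by (simp add: \<phi>f_def ennreal_mult[symmetric])
  also have "\<dots> \<le> ennreal (1 / b y) * (ennreal (b y) * \<psi> y)"
    by (rule mult_left_mono[OF Fle]) simp
  also have "\<dots> = \<psi> y" by (simp add: one mult.assoc[symmetric])
  finally show ?thesis .
qed

lemma claimB: assumes x: "x \<in> \<Omega>" shows "nonlocal_op \<Omega> K \<phi>f x \<le> F x"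
proof -
  have xc: "x \<in> closure \<Omega>" using x closure_subset by blast
  have "ennreal (nonlocal_op \<Omega> K \<phi>f x) = (\<integral>\<^sup>+ y. ennreal (indicator \<Omega> y * K x y * \<phi>f y) \<partial>lebesgue)"
    by (rule L_nn[OF x order_refl Om_open phif_cont])
       (use phif_pos closure_subset in \<open>force intro: less_imp_le\<close>)
  also have "\<dots> \<le> (\<integral>\<^sup>+ y. ennreal (indicator \<Omega> y * K x y) * \<psi> y \<partial>lebesgue)"
  proof (rule nn_integral_mono)
    fix y
    show "ennreal (indicator \<Omega> y * K x y * \<phi>f y) \<le> ennreal (indicator \<Omega> y * K x y) * \<psi> y"
    proof (cases "y \<in> \<Omega>")
      case True
      have "ennreal (indicator \<Omega> y * K x y * \<phi>f y) = ennreal (K x y) * ennreal (\<phi>f y)"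
        using True K_nonneg[OF x True] by (simp add: ennreal_mult')
      also have "\<dots> \<le> ennreal (K x y) * \<psi> y" by (intro mult_left_mono claimA True) simp
      finally show ?thesis using True by simp
    qed simp
  qed
  also have "\<dots> = (\<integral>\<^sup>+ y. ennreal (Kt x y * \<psi>r y) \<partial>lebesgue)"
  proof (rule nn_integral_cong_AE)
    show "AE y in lebesgue. ennreal (indicator \<Omega> y * K x y) * \<psi> y = ennreal (Kt x y * \<psi>r y)"
      using AE_fin[of x r0]
    proof eventually_elim
      case (elim y)
      show ?case
      proof (cases "y \<in> \<Omega> \<and> dist x y < r0")
        case True
        then have "\<psi> y \<noteq> \<infinity>" using elim by (auto simp: mem_cball)
        then show ?thesis using True K_nonneg[OF x]
          by (simp add: Kt_Om[OF x] ennreal_mult psir_eq psir_nonneg)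
      next
        case False
        then have Z: "indicator \<Omega> y * K x y = 0" using K_far[OF x] by (auto simp: indicator_def)
        show ?thesis by (simp only: Kt_Om[OF x] Z) simp
      qed
    qed
  qed
  also have "\<dots> = ennreal (F x)"
    unfolding F_def
    by (rule nn_integral_eq_integral[OF integrable_F[OF xc]])
       (use AE_gd in \<open>eventually_elim, simp add: Kt_bounds[OF xc] psir_nonneg\<close>)
  finally show ?thesis using F_nonneg[OF xc] by (simp add: ennreal_le_iff)
qed

lemma hard: "\<mu> \<in> lset \<Omega>"
  unfolding lset_def
proof (intro CollectI exI[of _ \<phi>f] conjI ballI phif_cont)
  show "0 < \<phi>f x" if "x \<in> closure \<Omega>" for x using phif_pos that by blast
  fix x assume x: "x \<in> \<Omega>"
  have e1: "b x * \<phi>f x = F x" using b_pos[OF x] by (simp add: \<phi>f_def)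
  have e2: "b x * \<phi>f x = - (a x * \<phi>f x) - \<mu> * \<phi>f x" by (simp add: b_def algebra_simps)
  show "nonlocal_op \<Omega> K \<phi>f x + a x * \<phi>f x + \<mu> * \<phi>f x \<le> 0"
    using claimB[OF x] e1 e2 by linarith
qed

end



context kctx2
begin

lemma witness_scale:
  assumes D: "D \<subseteq> \<Omega>" "open D" and c: "c > 0"
    and w: "continuous_on (closure D) f" "\<forall>x\<in>closure D. f x > 0"
      "\<forall>x\<in>D. nonlocal_op D K f x + a x * f x + l * f x \<le> 0"
  shows "continuous_on (closure D) (\<lambda>y. f y / c)" "\<forall>x\<in>closure D. f x / c > 0"
      "\<forall>x\<in>D. nonlocal_op D K (\<lambda>y. f y / c) x + a x * (f x / c) + l * (f x / c) \<le> 0"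
proof -
  show "continuous_on (closure D) (\<lambda>y. f y / c)" using w(1) c by (intro continuous_intros) auto
  show "\<forall>x\<in>closure D. f x / c > 0" using w(2) c by auto
  have L: "nonlocal_op D K (\<lambda>y. f y / c) x = nonlocal_op D K f x / c" for x
  proof -
    have "(\<lambda>y. indicator D y *\<^sub>R (K x y * (f y / c))) = (\<lambda>y. indicator D y *\<^sub>R (K x y * f y) / c)"
      by (auto simp: fun_eq_iff)
    then show ?thesis unfolding nonlocal_op_def set_lebesgue_integral_def by simp
  qed
  show "\<forall>x\<in>D. nonlocal_op D K (\<lambda>y. f y / c) x + a x * (f x / c) + l * (f x / c) \<le> 0"
  proof
    fix x assume "x \<in> D"
    then have "(nonlocal_op D K f x + a x * f x + l * f x) / c \<le> 0"
      using w(3) c by (simp add: divide_nonpos_pos)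
    then show "nonlocal_op D K (\<lambda>y. f y / c) x + a x * (f x / c) + l * (f x / c) \<le> 0"
      by (simp add: L add_divide_distrib)
  qed
qed

lemma hard_main:
  assumes L: "\<And>n. L \<le> lambda_p (\<Omega>n n) K a" and muL: "\<mu> < L"
  shows "\<mu> \<in> lset \<Omega>"
proof -
  have mu_in: "\<mu> \<in> lset (\<Omega>n n)" for n
  proof -
    obtain x where "x \<in> \<Omega>n n" using Omn_ne by blast
    then show ?thesis using lset_less[OF Omn_sub Omn_open] L[of n] muL by force
  qed
  then have "\<forall>n. \<exists>f. continuous_on (closure (\<Omega>n n)) f \<and> (\<forall>x\<in>closure (\<Omega>n n). f x > 0) \<and>
      (\<forall>x\<in>\<Omega>n n. nonlocal_op (\<Omega>n n) K f x + a x * f x + \<mu> * f x \<le> 0)"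
    unfolding lset_def by blast
  then obtain f0 where f0: "\<And>n. continuous_on (closure (\<Omega>n n)) (f0 n)"
    "\<And>n. \<forall>x\<in>closure (\<Omega>n n). f0 n x > 0"
    "\<And>n. \<forall>x\<in>\<Omega>n n. nonlocal_op (\<Omega>n n) K (f0 n) x + a x * f0 n x + \<mu> * f0 n x \<le> 0"
    by metis
  define \<delta> where "\<delta> = L - \<mu>"
  have del: "\<delta> > 0" "\<And>x. x \<in> \<Omega> \<Longrightarrow> \<delta> \<le> - a x - \<mu>"
  proof -
    show "\<delta> > 0" using muL by (simp add: \<delta>_def)
    fix x assume "x \<in> \<Omega>"
    then obtain n where "x \<in> \<Omega>n n" using exhaust by blast
    then have "lambda_p (\<Omega>n n) K a \<le> - a x" using lam_le[OF Omn_sub Omn_open] by blast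
    then show "\<delta> \<le> - a x - \<mu>" using L[of n] by (simp add: \<delta>_def)
  qed
  obtain A where A: "\<And>x. x \<in> \<Omega> \<Longrightarrow> \<bar>a x\<bar> \<le> A" using a_bound by blast
  define B where "B = A + \<bar>\<mu>\<bar> + \<delta>"
  obtain x0 where x0: "x0 \<in> \<Omega>" using Om_ne by blast
  have A0: "A \<ge> 0" using A[OF x0] by simp
  have Bb: "B > 0" "\<And>x. x \<in> \<Omega> \<Longrightarrow> - a x - \<mu> \<le> B"
  proof -
    show "B > 0" using A0 del(1) by (simp add: B_def)
    fix x assume x: "x \<in> \<Omega>"
    have "- a x \<le> A" using abs_le_D2[OF A[OF x]] .
    moreover have "- \<mu> \<le> \<bar>\<mu>\<bar>" by (rule abs_ge_minus_self)
    ultimately show "- a x - \<mu> \<le> B" using del(1) by (simp add: B_def)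
  qed
  obtain e where e: "e > 0" "cball x0 e \<subseteq> \<Omega>" using Om_open x0 open_contains_cball by blast
  define s0 where "s0 = min e (r1/2)"
  have s0: "0 < s0" "s0 \<le> r1/2" "cball x0 s0 \<subseteq> \<Omega>"
    using e radii by (auto simp: s0_def mem_cball)
  obtain N0 where N0: "\<And>n. n \<ge> N0 \<Longrightarrow> cball x0 s0 \<subseteq> \<Omega>n n"
    using compact_event[OF compact_cball s0(3)] by blast
  define I where "I n = (\<integral>\<^sup>+ y. ennreal (indicator (\<Omega>n n) y * f0 n y) * indicator (ball x0 s0) y \<partial>lebesgue)" for n
  have I: "0 < I n" "I n < \<infinity>" if n: "n \<ge> N0" for n
  proof -
    have sub: "cball x0 s0 \<subseteq> closure (\<Omega>n n)" using N0[OF n] closure_subset by blast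
    have cc: "continuous_on (cball x0 s0) (f0 n)" using f0(1) sub continuous_on_subset by blast
    have ne: "cball x0 s0 \<noteq> {}" using s0 by auto
    obtain xm where xm: "xm \<in> cball x0 s0" "\<And>y. y \<in> cball x0 s0 \<Longrightarrow> f0 n xm \<le> f0 n y"
      using continuous_attains_inf[OF compact_cball ne cc] by blast
    obtain xM where xM: "xM \<in> cball x0 s0" "\<And>y. y \<in> cball x0 s0 \<Longrightarrow> f0 n y \<le> f0 n xM"
      using continuous_attains_sup[OF compact_cball ne cc] by blast
    have m: "f0 n xm > 0" using f0(2) xm(1) sub by blast
    have eq: "ennreal (indicator (\<Omega>n n) y * f0 n y) * indicator (ball x0 s0) y
        = ennreal (f0 n y) * indicator (ball x0 s0) y" for y
    proof (cases "y \<in> ball x0 s0")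
      case True
      then have "y \<in> \<Omega>n n" using N0[OF n] ball_subset_cball[of x0 s0] by blast
      then show ?thesis using True by simp
    qed simp
    have "ennreal (f0 n xm) * emeasure lebesgue (ball x0 s0) = (\<integral>\<^sup>+ y. ennreal (f0 n xm) * indicator (ball x0 s0) y \<partial>lebesgue)"
      by (rule nn_integral_cmult_indicator[symmetric]) simp
    also have "\<dots> \<le> I n" unfolding I_def eq
      by (rule nn_integral_mono) (use xm in \<open>auto simp: indicator_def intro!: ennreal_leI\<close>)
    finally have "ennreal (f0 n xm) * emeasure lebesgue (ball x0 s0) \<le> I n" .
    moreover have "0 < ennreal (f0 n xm) * emeasure lebesgue (ball x0 s0)"
      using m s0 by (simp add: emeasure_ball ennreal_mult[symmetric])
    ultimately show "0 < I n" by simp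
    have "I n \<le> (\<integral>\<^sup>+ y. ennreal (f0 n xM) * indicator (ball x0 s0) y \<partial>lebesgue)" unfolding I_def eq
      by (rule nn_integral_mono) (use xM in \<open>auto simp: indicator_def intro!: ennreal_leI\<close>)
    also have "\<dots> = ennreal (f0 n xM) * emeasure lebesgue (ball x0 s0)"
      by (rule nn_integral_cmult_indicator) simp
    also have "\<dots> < \<infinity>" using emeasure_lborel_ball_finite[of x0 s0] by (simp add: ennreal_mult_less_top)
    finally show "I n < \<infinity>" .
  qed
  define c where "c n = (if N0 \<le> n then enn2real (I n) else 1)" for n
  have c: "c n > 0" for n
    using I[of n] by (auto simp: c_def enn2real_positive_iff)
  have Ic: "I n = ennreal (c n)" if "n \<ge> N0" for n
    using I[OF that] that by (simp add: c_def ennreal_enn2real_if)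
  define \<phi> where "\<phi> n y = f0 n y / c n" for n y
  have ws: "continuous_on (closure (\<Omega>n n)) (\<phi> n)" "\<forall>x\<in>closure (\<Omega>n n). \<phi> n x > 0"
      "\<forall>x\<in>\<Omega>n n. nonlocal_op (\<Omega>n n) K (\<phi> n) x + a x * \<phi> n x + \<mu> * \<phi> n x \<le> 0" for n
    using witness_scale[OF Omn_sub[of n] Omn_open[of n] c[of n] f0(1)[of n] f0(2)[of n] f0(3)[of n]]
    by (simp_all add: \<phi>_def[abs_def])
  have nrm: "(\<integral>\<^sup>+ y. ennreal (indicator (\<Omega>n n) y * \<phi> n y) * indicator (ball x0 s0) y \<partial>lebesgue) = 1"
    if n: "n \<ge> N0" for n
  proof -
    have "(\<integral>\<^sup>+ y. ennreal (indicator (\<Omega>n n) y * \<phi> n y) * indicator (ball x0 s0) y \<partial>lebesgue)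
        = (\<integral>\<^sup>+ y. ennreal (1 / c n) * (ennreal (indicator (\<Omega>n n) y * f0 n y) * indicator (ball x0 s0) y) \<partial>lebesgue)"
    proof (rule nn_integral_cong)
      fix y
      have eqn: "indicator (\<Omega>n n) y * \<phi> n y = (1 / c n) * (indicator (\<Omega>n n) y * f0 n y)"
        by (simp add: \<phi>_def)
      have nn: "0 \<le> 1 / c n" using c[of n] by simp
      have e: "ennreal (indicator (\<Omega>n n) y * \<phi> n y) = ennreal (1 / c n) * ennreal (indicator (\<Omega>n n) y * f0 n y)"
        by (simp only: eqn ennreal_mult'[OF nn])
      show "ennreal (indicator (\<Omega>n n) y * \<phi> n y) * indicator (ball x0 s0) y
          = ennreal (1 / c n) * (ennreal (indicator (\<Omega>n n) y * f0 n y) * indicator (ball x0 s0) y)"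
        by (simp only: e mult.assoc)
    qed
    also have "\<dots> = ennreal (1 / c n) * I n"
    proof -
      have m1: "(\<lambda>y. ennreal (indicator (\<Omega>n n) y * f0 n y)) \<in> borel_measurable lebesgue"
        using meas_cont[OF Omn_open f0(1)] by (rule measurable_compose[OF _ measurable_ennreal])
      have m2: "(\<lambda>y. ennreal (indicator (\<Omega>n n) y * f0 n y) * indicator (ball x0 s0) y) \<in> borel_measurable lebesgue"
        by (intro borel_measurable_times_ennreal m1 borel_measurable_indicator) simp
      show ?thesis unfolding I_def by (rule nn_integral_cmult[OF m2])
    qed
    also have "\<dots> = 1" using c[of n] Ic[OF n] by (simp add: ennreal_mult[symmetric])
    finally show ?thesis .
  qed
  interpret hcore \<Omega> a K r0 r1 C0 c0 \<Omega>n \<phi> \<mu> \<delta> B x0 s0 N0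
    by unfold_locales (use ws del Bb x0 s0 N0 nrm in auto)
  show ?thesis by (rule hard)
qed

lemma conv: "(\<lambda>n. lambda_p (\<Omega>n n) K a) \<longlonglongrightarrow> lambda_p \<Omega> K a"
proof -
  define X where "X n = lambda_p (\<Omega>n n) K a" for n
  have dec: "decseq X"
  proof (rule decseq_SucI)
    fix n
    obtain x where "x \<in> \<Omega>n n" using Omn_ne by blast
    then show "X (Suc n) \<le> X n"
      unfolding X_def by (rule lam_mono[OF incr Omn_sub Omn_open Omn_open])
  qed
  have lb: "\<forall>i. lambda_p \<Omega> K a \<le> X i"
  proof
    fix i
    obtain x where "x \<in> \<Omega>n i" using Omn_ne by blast
    then show "lambda_p \<Omega> K a \<le> X i"
      unfolding X_def by (rule lam_mono[OF Omn_sub order_refl Omn_open Om_open])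
  qed
  obtain L where L: "X \<longlonglongrightarrow> L" "\<forall>i. L \<le> X i" using decseq_convergent[OF dec lb] by blast
  have "lambda_p \<Omega> K a \<le> L" using lb by (intro LIMSEQ_le_const[OF L(1)]) auto
  moreover have "L \<le> lambda_p \<Omega> K a"
  proof (rule dense_le)
    fix \<mu> assume "\<mu> < L"
    then have "\<mu> \<in> lset \<Omega>" using hard_main[of L \<mu>] L(2) by (auto simp: X_def)
    moreover obtain x where "x \<in> \<Omega>" using Om_ne by blast
    ultimately show "\<mu> \<le> lambda_p \<Omega> K a"
      unfolding lambda_p_lset using lset_bdd[OF order_refl] by (meson cSup_upper)
  qed
  ultimately have "L = lambda_p \<Omega> K a" by simp
  then show ?thesis using L(1) by (simp add: X_def[abs_def])
qed

end

theorem lemma2p4: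
  fixes \<Omega> :: "'a::euclidean_space set"
    and a :: "'a \<Rightarrow> real"
    and K :: "'a \<Rightarrow> 'a \<Rightarrow> real"
    and \<Omega>n :: "nat \<Rightarrow> 'a set"
    and r0 r1 C0 c0 :: real
  assumes dom: "is_domain \<Omega>"
    and a_cont: "continuous_on (closure \<Omega>) a"
    and a_bdd: "bounded (a ` \<Omega>)"
    and K_nonneg: "\<And>x y. x \<in> \<Omega> \<Longrightarrow> y \<in> \<Omega> \<Longrightarrow> K x y \<ge> 0"
    and K_meas: "\<And>x. x \<in> \<Omega> \<Longrightarrow> set_borel_measurable lebesgue \<Omega> (K x)"
    and K_ucont: "AE y in lebesgue. y \<in> \<Omega> \<longrightarrow> uniformly_continuous_on \<Omega> (\<lambda>x. K x y)"
    and radii: "r0 \<ge> r1" "r1 > 0"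
    and const_bds: "C0 \<ge> c0" "c0 > 0"
    and K_bounds: "\<And>x y. x \<in> \<Omega> \<Longrightarrow> y \<in> \<Omega> \<Longrightarrow>
        C0 * indicator (\<Omega> \<inter> ball x r0) y \<ge> K x y \<and> K x y \<ge> c0 * indicator (\<Omega> \<inter> ball x r1) y"
    and sub_dom: "\<And>n. is_domain (\<Omega>n n) \<and> \<Omega>n n \<subseteq> \<Omega>"
    and incr: "\<And>n. \<Omega>n n \<subseteq> \<Omega>n (Suc n)"
    and exhaust: "(\<Union>n. \<Omega>n n) = \<Omega>"
  shows "(\<lambda>n. lambda_p (\<Omega>n n) K a) \<longlonglongrightarrow> lambda_p \<Omega> K a"
proof -
  interpret kctx2 \<Omega> a K r0 r1 C0 c0 \<Omega>n
    by unfold_locales (fact dom a_cont a_bdd K_nonneg K_meas K_ucont radii const_bds K_bounds sub_dom incr exhaust)+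
  show ?thesis by (rule conv)
qed

end
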